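(* Let $\mathcal X\subseteq\{\pm1\}^d$, let $r,K,q$ be positive integers, let $L>0$, and let $k$ be an odd integer with $1\le k\le d$. Let $G^0,G^1,\ldots,G^r:\{\pm1\}^d\to\{\pm1\}^d$ with $G^0(\mathbf x)=\mathbf x$, and suppose that for every $i\in[r]$ and $j\in[d]$ there is a function $p^i_j:\{\pm1\}^d\to\{\pm1\}$ whose multilinear extension is a polynomial of degree at most $K$ that is $L$-Lipschitz on $[-1,1]^d$ with respect to $\|\cdot\|_\infty$, such that $G^i_j(\mathbf x)=p^i_j(G^{i-1}(\mathbf x))$ for all $\mathbf x\in\mathcal X$. Independently for every $i\in[r]$ and $j\in[q]$ draw $\mathbf w^{i,j}$ uniformly from $\mathcal W_{d,k}=\{\mathbf w\in\{-1,0,1\}^d:\sum_{l=1}^d|w_l|=k\}$ and set $f^*_{i,j}(\mathbf x)=\mathrm{sign}\big(\sum_{l=1}^d w^{i,j}_lG^i_l(\mathbf x)\big)$ for $\mathbf x\in\mathcal X$. Let $\mathbf f^*=(f^*_{i,j})_{i\in[r],j\in[q]}:\mathcal X\to\{\pm1\}^{rq}$. Then, with probability at least $1-4drq|\mathcal X|e^{-\Omega\left(\frac{q}{L^2k^2d}\right)}$ over the choice of the $\mathbf w^{i,j}$, the function $\mathbf f^*$ has an $\left(r,K,O\left(kd^K\right),2k+1\right)$-hierarchy, with levels $L_i=\{(i',j):i'\le i,\ j\in[q]\}$.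
   Context: For a polynomial $p$, $\|p\|_{\mathrm{co}}$ denotes the Euclidean norm of its coefficient vector (in the monomial basis). For $h:\mathcal X\to\mathbb R^s$ and $f:\mathcal X\to\{\pm1\}$, $f$ is a $(K,M,B)$-PTF of $h$ if there is a polynomial $p:\mathbb R^s\to\mathbb R$ of degree at most $K$ with $\|p\|_{\mathrm{co}}\le M$ and $B\ge p(h(\mathbf x))f(\mathbf x)\ge1$ for all $\mathbf x\in\mathcal X$; a $(K,M,B)$-PTF (of the input) is a $(K,M,B)$-PTF of the identity map. For labels $\mathbf f^*=(f^*_\ell)_{\ell\in\Lambda}$ and nested sets $L_1\subseteq\cdots\subseteq L_r=\Lambda$, $\mathbf f^*$ has an $(r,K,M,B)$-hierarchy (with these levels) if every $f^*_\ell$, $\ell\in L_1$, is a $(K,M,B)$-PTF of the input, and for $i\ge2$ every $f^*_\ell$, $\ell\in L_i$, is a $(K,M,B)$-PTF of $\mathbf f^*_{L_{i-1}}=(f^*_{\ell'})_{\ell'\in L_{i-1}}$. The constants in $O(\cdot),\Omega(\cdot)$ may depend on $K$. *)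

theory Defs
  imports "HOL-Analysis.Analysis" "HOL-Library.Poly_Mapping" "HOL-Probability.Probability"
begin

text \<open>Multivariate real polynomials in variables of type 'v, in the monomial basis:
  a finitely supported map from monomials (exponent vectors 'v =>0 nat) to real coefficients.\<close>

type_synonym 'v rpoly = "('v \<Rightarrow>\<^sub>0 nat) \<Rightarrow>\<^sub>0 real"

definition rpoly_eval :: "'v rpoly \<Rightarrow> ('v \<Rightarrow> real) \<Rightarrow> real" where
  "rpoly_eval p z = (\<Sum>\<alpha>\<in>Poly_Mapping.keys p. Poly_Mapping.lookup p \<alpha> * (\<Prod>v\<in>Poly_Mapping.keys \<alpha>. z v ^ Poly_Mapping.lookup \<alpha> v))"

definition mono_deg :: "('v \<Rightarrow>\<^sub>0 nat) \<Rightarrow> nat" where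
  "mono_deg \<alpha> = (\<Sum>v\<in>Poly_Mapping.keys \<alpha>. Poly_Mapping.lookup \<alpha> v)"

definition rpoly_deg_le :: "'v rpoly \<Rightarrow> nat \<Rightarrow> bool" where
  "rpoly_deg_le p K \<longleftrightarrow> (\<forall>\<alpha>\<in>Poly_Mapping.keys p. mono_deg \<alpha> \<le> K)"

definition rpoly_vars :: "'v rpoly \<Rightarrow> 'v set" where
  "rpoly_vars p = (\<Union>\<alpha>\<in>Poly_Mapping.keys p. Poly_Mapping.keys \<alpha>)"

definition coeff_norm :: "'v rpoly \<Rightarrow> real" where
  "coeff_norm p = sqrt (\<Sum>\<alpha>\<in>Poly_Mapping.keys p. (Poly_Mapping.lookup p \<alpha>)^2)"

definition multilinear :: "'v rpoly \<Rightarrow> bool" where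
  "multilinear p \<longleftrightarrow> (\<forall>\<alpha>\<in>Poly_Mapping.keys p. \<forall>v. Poly_Mapping.lookup \<alpha> v \<le> 1)"

text \<open>Points of R^d are functions nat => real, only coordinates 0..d-1 being relevant;
  the hypercube {+-1}^d is represented canonically (coordinates >= d are 0).\<close>
definition cube :: "nat \<Rightarrow> (nat \<Rightarrow> real) set" where
  "cube d = {x. (\<forall>l<d. x l \<in> {-1, 1}) \<and> (\<forall>l\<ge>d. x l = 0)}"

definition is_multilinear_ext :: "nat \<Rightarrow> ((nat \<Rightarrow> real) \<Rightarrow> real) \<Rightarrow> nat rpoly \<Rightarrow> bool" where
  "is_multilinear_ext d g P \<longleftrightarrow> multilinear P \<and> rpoly_vars P \<subseteq> {..<d} \<and>
     (\<forall>x\<in>cube d. rpoly_eval P x = g x)"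

definition lipschitz_box :: "nat \<Rightarrow> real \<Rightarrow> nat rpoly \<Rightarrow> bool" where
  "lipschitz_box d L P \<longleftrightarrow> (\<forall>y z. (\<forall>l<d. \<bar>y l\<bar> \<le> 1 \<and> \<bar>z l\<bar> \<le> 1) \<longrightarrow>
     \<bar>rpoly_eval P y - rpoly_eval P z\<bar> \<le> L * Max ((\<lambda>l. \<bar>y l - z l\<bar>) ` {..<d}))"

definition is_PTF :: "'x set \<Rightarrow> 'v set \<Rightarrow> ('x \<Rightarrow> 'v \<Rightarrow> real) \<Rightarrow> ('x \<Rightarrow> real)
     \<Rightarrow> nat \<Rightarrow> real \<Rightarrow> real \<Rightarrow> bool" where
  "is_PTF X V h f K M B \<longleftrightarrow> (\<exists>p. rpoly_vars p \<subseteq> V \<and> rpoly_deg_le p K \<and> coeff_norm p \<le> M \<and>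
     (\<forall>x\<in>X. 1 \<le> rpoly_eval p (h x) * f x \<and> rpoly_eval p (h x) * f x \<le> B))"

definition has_hierarchy :: "(nat \<Rightarrow> real) set \<Rightarrow> nat \<Rightarrow> nat \<Rightarrow> (nat \<Rightarrow> 'l set)
     \<Rightarrow> ('l \<Rightarrow> (nat \<Rightarrow> real) \<Rightarrow> real) \<Rightarrow> nat \<Rightarrow> real \<Rightarrow> real \<Rightarrow> bool" where
  "has_hierarchy X d r Lv f K M B \<longleftrightarrow>
     (\<forall>i\<in>{1..<r}. Lv i \<subseteq> Lv (Suc i)) \<and>
     (\<forall>m\<in>Lv 1. is_PTF X {..<d} (\<lambda>x. x) (f m) K M B) \<and>
     (\<forall>i\<in>{2..r}. \<forall>m\<in>Lv i. is_PTF X (Lv (i - 1)) (\<lambda>x m'. f m' x) (f m) K M B)"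

definition Wdk :: "nat \<Rightarrow> nat \<Rightarrow> (nat \<Rightarrow> real) set" where
  "Wdk d k = {w. (\<forall>l<d. w l \<in> {-1, 0, 1}) \<and> (\<forall>l\<ge>d. w l = 0) \<and> (\<Sum>l<d. \<bar>w l\<bar>) = real k}"

definition levels :: "nat \<Rightarrow> nat \<Rightarrow> (nat \<times> nat) set" where
  "levels q i = {1..i} \<times> {1..q}"

definition fstar :: "nat \<Rightarrow> (nat \<Rightarrow> (nat \<Rightarrow> real) \<Rightarrow> (nat \<Rightarrow> real))
     \<Rightarrow> (nat \<times> nat \<Rightarrow> nat \<Rightarrow> real) \<Rightarrow> nat \<times> nat \<Rightarrow> (nat \<Rightarrow> real) \<Rightarrow> real" where
  "fstar d G W ij x = sgn (\<Sum>l<d. W ij l * G (fst ij) x l)"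

end

theory Submission
  imports Defs
begin

definition mon :: "('v \<Rightarrow>\<^sub>0 nat) \<Rightarrow> ('v \<Rightarrow> real) \<Rightarrow> real" where
  "mon \<alpha> z = (\<Prod>v\<in>Poly_Mapping.keys \<alpha>. z v ^ Poly_Mapping.lookup \<alpha> v)"

definition n1 :: "'v rpoly \<Rightarrow> real" where
  "n1 p = (\<Sum>\<alpha>\<in>Poly_Mapping.keys p. \<bar>Poly_Mapping.lookup p \<alpha>\<bar>)"

definition pvar :: "'v \<Rightarrow> 'v rpoly" where
  "pvar m = Poly_Mapping.single (Poly_Mapping.single m 1) 1"

definition pconst :: "real \<Rightarrow> 'v rpoly" where
  "pconst c = Poly_Mapping.single 0 c"

lemma rpoly_eval_alt:
  assumes "finite S" "Poly_Mapping.keys p \<subseteq> S"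
  shows "rpoly_eval p z = (\<Sum>\<alpha>\<in>S. Poly_Mapping.lookup p \<alpha> * mon \<alpha> z)"
  unfolding rpoly_eval_def mon_def
  by (rule sum.mono_neutral_left) (use assms in \<open>auto simp: in_keys_iff\<close>)

lemma mon_alt:
  assumes "finite S" "Poly_Mapping.keys \<alpha> \<subseteq> S"
  shows "mon \<alpha> z = (\<Prod>v\<in>S. z v ^ Poly_Mapping.lookup \<alpha> v)"
  unfolding mon_def
  by (rule prod.mono_neutral_left) (use assms in \<open>auto simp: in_keys_iff\<close>)

lemma keys_add_nat: "Poly_Mapping.keys (\<alpha> + \<beta> :: 'v \<Rightarrow>\<^sub>0 nat) = Poly_Mapping.keys \<alpha> \<union> Poly_Mapping.keys \<beta>"
  by (auto simp: in_keys_iff lookup_add)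

lemma mon_add: "mon (\<alpha> + \<beta>) z = mon \<alpha> z * mon \<beta> z"
proof -
  let ?S = "Poly_Mapping.keys \<alpha> \<union> Poly_Mapping.keys \<beta>"
  have "mon (\<alpha> + \<beta>) z = (\<Prod>v\<in>?S. z v ^ Poly_Mapping.lookup (\<alpha>+\<beta>) v)"
    by (rule mon_alt) (auto simp: keys_add_nat)
  also have "\<dots> = (\<Prod>v\<in>?S. z v ^ Poly_Mapping.lookup \<alpha> v) * (\<Prod>v\<in>?S. z v ^ Poly_Mapping.lookup \<beta> v)"
    by (simp add: lookup_add power_add prod.distrib)
  also have "\<dots> = mon \<alpha> z * mon \<beta> z"
    by (subst (1 2) mon_alt[of ?S]) auto
  finally show ?thesis .
qed

lemma mon_zero [simp]: "mon 0 z = 1"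
  by (simp add: mon_def)

lemma mon_single_gen: "mon (Poly_Mapping.single m n) z = z m ^ n"
  by (cases "n = 0") (simp_all add: mon_def)

lemma mon_single: "mon (Poly_Mapping.single m 1) z = z m"
  by (simp add: mon_single_gen)

lemma eval_zero [simp]: "rpoly_eval 0 z = 0"
  by (simp add: rpoly_eval_def)

lemma eval_add: "rpoly_eval (p + q) z = rpoly_eval p z + rpoly_eval q z"
proof -
  let ?S = "Poly_Mapping.keys p \<union> Poly_Mapping.keys q"
  have "rpoly_eval (p + q) z = (\<Sum>\<alpha>\<in>?S. Poly_Mapping.lookup (p+q) \<alpha> * mon \<alpha> z)"
    by (rule rpoly_eval_alt) (auto simp: in_keys_iff lookup_add)
  also have "\<dots> = (\<Sum>\<alpha>\<in>?S. Poly_Mapping.lookup p \<alpha> * mon \<alpha> z) + (\<Sum>\<alpha>\<in>?S. Poly_Mapping.lookup q \<alpha> * mon \<alpha> z)"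
    by (simp add: lookup_add distrib_right sum.distrib)
  also have "\<dots> = rpoly_eval p z + rpoly_eval q z"
    by (subst (1 2) rpoly_eval_alt[of ?S]) auto
  finally show ?thesis .
qed

lemma eval_sum: "rpoly_eval (\<Sum>i\<in>A. p i) z = (\<Sum>i\<in>A. rpoly_eval (p i) z)"
  by (induction A rule: infinite_finite_induct) (auto simp: eval_add)

lemma eval_single: "rpoly_eval (Poly_Mapping.single \<alpha> c) z = c * mon \<alpha> z"
  by (cases "c = 0") (auto simp: rpoly_eval_def mon_def)

lemma poly_expand: "p = (\<Sum>\<alpha>\<in>Poly_Mapping.keys p. Poly_Mapping.single \<alpha> (Poly_Mapping.lookup p \<alpha>))"
proof (rule poly_mapping_eqI)
  fix \<beta>
  show "Poly_Mapping.lookup p \<beta> = Poly_Mapping.lookup (\<Sum>\<alpha>\<in>Poly_Mapping.keys p. Poly_Mapping.single \<alpha> (Poly_Mapping.lookup p \<alpha>)) \<beta>"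
    by (cases "\<beta> \<in> Poly_Mapping.keys p") (auto simp: lookup_sum lookup_single when_def in_keys_iff)
qed

lemma mult_expand: "(p::'v rpoly) * q = (\<Sum>\<alpha>\<in>Poly_Mapping.keys p. \<Sum>\<beta>\<in>Poly_Mapping.keys q.
   Poly_Mapping.single (\<alpha>+\<beta>) (Poly_Mapping.lookup p \<alpha> * Poly_Mapping.lookup q \<beta>))"
proof -
  have "p * q = (\<Sum>\<alpha>\<in>Poly_Mapping.keys p. Poly_Mapping.single \<alpha> (Poly_Mapping.lookup p \<alpha>)) *
                (\<Sum>\<beta>\<in>Poly_Mapping.keys q. Poly_Mapping.single \<beta> (Poly_Mapping.lookup q \<beta>))"
    using poly_expand[of p] poly_expand[of q] by simp
  also have "\<dots> = (\<Sum>\<alpha>\<in>Poly_Mapping.keys p. \<Sum>\<beta>\<in>Poly_Mapping.keys q.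
   Poly_Mapping.single (\<alpha>+\<beta>) (Poly_Mapping.lookup p \<alpha> * Poly_Mapping.lookup q \<beta>))"
    by (simp add: sum_product mult_single)
  finally show ?thesis .
qed

lemma eval_mult: "rpoly_eval (p * q) z = rpoly_eval p z * rpoly_eval q z"
  apply (subst mult_expand)
  apply (simp add: eval_sum eval_single mon_add)
  apply (simp add: rpoly_eval_def sum_product mult_ac mon_def)
  done

lemma eval_one [simp]: "rpoly_eval 1 z = 1"
  by (simp add: rpoly_eval_def)

lemma eval_power: "rpoly_eval (p ^ n) z = rpoly_eval p z ^ n"
  by (induction n) (auto simp: eval_mult)

lemma eval_prod: "rpoly_eval (\<Prod>i\<in>A. p i) z = (\<Prod>i\<in>A. rpoly_eval (p i) z)"
  by (induction A rule: infinite_finite_induct) (auto simp: eval_mult)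

lemma eval_pvar [simp]: "rpoly_eval (pvar m) z = z m"
  by (simp add: pvar_def eval_single mon_single_gen)

lemma eval_pconst [simp]: "rpoly_eval (pconst c) z = c"
  by (simp add: pconst_def eval_single)

lemma n1_alt:
  assumes "finite S" "Poly_Mapping.keys p \<subseteq> S"
  shows "n1 p = (\<Sum>\<alpha>\<in>S. \<bar>Poly_Mapping.lookup p \<alpha>\<bar>)"
  unfolding n1_def
  by (rule sum.mono_neutral_left) (use assms in \<open>auto simp: in_keys_iff\<close>)

lemma n1_nonneg: "n1 p \<ge> 0"
  by (simp add: n1_def sum_nonneg)

lemma n1_add: "n1 (p + q) \<le> n1 p + n1 q"
proof -
  let ?S = "Poly_Mapping.keys p \<union> Poly_Mapping.keys q"
  have "n1 (p + q) = (\<Sum>\<alpha>\<in>?S. \<bar>Poly_Mapping.lookup (p+q) \<alpha>\<bar>)"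
    by (rule n1_alt) (auto simp: in_keys_iff lookup_add)
  also have "\<dots> \<le> (\<Sum>\<alpha>\<in>?S. \<bar>Poly_Mapping.lookup p \<alpha>\<bar>) + (\<Sum>\<alpha>\<in>?S. \<bar>Poly_Mapping.lookup q \<alpha>\<bar>)"
    by (simp add: lookup_add sum.distrib[symmetric] sum_mono abs_triangle_ineq)
  also have "\<dots> = n1 p + n1 q"
    by (subst (1 2) n1_alt[of ?S]) auto
  finally show ?thesis .
qed

lemma n1_zero [simp]: "n1 0 = 0"
  by (simp add: n1_def)

lemma n1_sum: "n1 (\<Sum>i\<in>A. p i) \<le> (\<Sum>i\<in>A. n1 (p i))"
proof (induction A rule: infinite_finite_induct)
  case (insert x F)
  then show ?case using n1_add[of "p x" "sum p F"] by simp
qed auto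

lemma n1_single [simp]: "n1 (Poly_Mapping.single \<alpha> c) = \<bar>c\<bar>"
  by (cases "c = 0") (auto simp: n1_def)

lemma n1_mult: "n1 ((p::'v rpoly) * q) \<le> n1 p * n1 q"
proof -
  have "n1 (p * q) \<le> (\<Sum>\<alpha>\<in>Poly_Mapping.keys p. n1 (\<Sum>\<beta>\<in>Poly_Mapping.keys q.
   Poly_Mapping.single (\<alpha>+\<beta>) (Poly_Mapping.lookup p \<alpha> * Poly_Mapping.lookup q \<beta>)))"
    by (subst mult_expand) (rule n1_sum)
  also have "\<dots> \<le> (\<Sum>\<alpha>\<in>Poly_Mapping.keys p. \<Sum>\<beta>\<in>Poly_Mapping.keys q.
       \<bar>Poly_Mapping.lookup p \<alpha> * Poly_Mapping.lookup q \<beta>\<bar>)"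
    by (rule sum_mono) (rule order.trans[OF n1_sum], simp)
  also have "\<dots> = n1 p * n1 q"
    by (simp add: n1_def sum_product abs_mult)
  finally show ?thesis .
qed

lemma n1_one [simp]: "n1 (1::'v rpoly) = 1"
  by (simp add: n1_def)

lemma n1_power: "n1 ((p::'v rpoly) ^ n) \<le> n1 p ^ n"
proof (induction n)
  case (Suc n)
  have "n1 (p ^ Suc n) \<le> n1 p * n1 (p ^ n)" by (simp add: n1_mult)
  also have "\<dots> \<le> n1 p * n1 p ^ n" by (rule mult_left_mono[OF Suc n1_nonneg])
  finally show ?case by simp
qed simp

lemma n1_prod: "n1 (\<Prod>i\<in>A. (p i :: 'v rpoly)) \<le> (\<Prod>i\<in>A. n1 (p i))"
proof (induction A rule: infinite_finite_induct)
  case (insert x F)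
  have "n1 (\<Prod>i\<in>insert x F. p i) \<le> n1 (p x) * n1 (\<Prod>i\<in>F. p i)" using insert by (simp add: n1_mult)
  also have "\<dots> \<le> n1 (p x) * (\<Prod>i\<in>F. n1 (p i))" by (rule mult_left_mono[OF insert(3) n1_nonneg])
  finally show ?case using insert by simp
qed auto

lemma n1_pvar [simp]: "n1 (pvar m) = 1" by (simp add: pvar_def)
lemma n1_pconst [simp]: "n1 (pconst c) = \<bar>c\<bar>" by (simp add: pconst_def)

lemma coeff_norm_le_n1: "coeff_norm p \<le> n1 p"
  using L2_set_le_sum_abs[of "Poly_Mapping.lookup p" "Poly_Mapping.keys p"]
  by (simp add: coeff_norm_def n1_def L2_set_def)

lemma mono_deg_add: "mono_deg (\<alpha> + \<beta>) = mono_deg \<alpha> + mono_deg \<beta>"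
proof -
  let ?S = "Poly_Mapping.keys \<alpha> \<union> Poly_Mapping.keys \<beta>"
  have e: "mono_deg \<gamma> = (\<Sum>v\<in>?S. Poly_Mapping.lookup \<gamma> v)" if "Poly_Mapping.keys \<gamma> \<subseteq> ?S" for \<gamma>
    unfolding mono_deg_def by (rule sum.mono_neutral_left) (use that in \<open>auto simp: in_keys_iff\<close>)
  show ?thesis
    by (subst (1 2 3) e) (auto simp: keys_add_nat lookup_add sum.distrib)
qed

lemma mono_deg_single_gen: "mono_deg (Poly_Mapping.single m (n::nat)) = n"
  by (cases "n = 0") (simp_all add: mono_deg_def)

lemma mono_deg_single: "mono_deg (Poly_Mapping.single m (1::nat)) = 1"
  by (simp add: mono_deg_single_gen)

lemma deg_le_add: "rpoly_deg_le p K \<Longrightarrow> rpoly_deg_le q K \<Longrightarrow> rpoly_deg_le (p + q) K"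
  unfolding rpoly_deg_le_def using keys_add[of p q] by blast

lemma deg_le_zero [simp]: "rpoly_deg_le 0 K"
  by (simp add: rpoly_deg_le_def)

lemma deg_le_sum: "(\<And>i. i \<in> A \<Longrightarrow> rpoly_deg_le (p i) K) \<Longrightarrow> rpoly_deg_le (\<Sum>i\<in>A. p i) K"
  by (induction A rule: infinite_finite_induct) (auto intro: deg_le_add)

lemma deg_le_mult: "rpoly_deg_le p K1 \<Longrightarrow> rpoly_deg_le q K2 \<Longrightarrow> rpoly_deg_le (p * q) (K1 + K2)"
  unfolding rpoly_deg_le_def using keys_mult[of p q] by (fastforce simp: mono_deg_add)

lemma deg_le_mono: "rpoly_deg_le p K1 \<Longrightarrow> K1 \<le> K2 \<Longrightarrow> rpoly_deg_le p K2"
  unfolding rpoly_deg_le_def by auto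

lemma deg_le_one [simp]: "rpoly_deg_le 1 K"
  by (simp add: rpoly_deg_le_def mono_deg_def)

lemma deg_le_pconst [simp]: "rpoly_deg_le (pconst c) K"
  by (simp add: rpoly_deg_le_def mono_deg_def pconst_def)

lemma deg_le_pvar: "K \<ge> 1 \<Longrightarrow> rpoly_deg_le (pvar m) K"
  by (simp add: rpoly_deg_le_def mono_deg_single_gen pvar_def)

lemma deg_le_power: "rpoly_deg_le p K \<Longrightarrow> rpoly_deg_le (p ^ n) (n * K)"
  by (induction n) (auto intro: deg_le_mult[of _ K _ "_ * K", simplified])

lemma deg_le_prod: "(\<And>i. i \<in> A \<Longrightarrow> rpoly_deg_le (p i) (D i)) \<Longrightarrow> rpoly_deg_le (\<Prod>i\<in>A. p i) (\<Sum>i\<in>A. D i)"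
  by (induction A rule: infinite_finite_induct) (auto intro: deg_le_mult)

lemma vars_add: "rpoly_vars (p + q) \<subseteq> rpoly_vars p \<union> rpoly_vars q"
  unfolding rpoly_vars_def using keys_add[of p q] by blast

lemma vars_zero [simp]: "rpoly_vars 0 = {}"
  by (simp add: rpoly_vars_def)

lemma vars_sum: "(\<And>i. i \<in> A \<Longrightarrow> rpoly_vars (p i) \<subseteq> V) \<Longrightarrow> rpoly_vars (\<Sum>i\<in>A. p i) \<subseteq> V"
proof (induction A rule: infinite_finite_induct)
  case (insert x F)
  then show ?case using vars_add[of "p x" "sum p F"] by auto
qed auto

lemma vars_mult: "rpoly_vars (p * q) \<subseteq> rpoly_vars p \<union> rpoly_vars q"
  unfolding rpoly_vars_def using keys_mult[of p q] by (fastforce simp: keys_add_nat)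

lemma vars_one [simp]: "rpoly_vars 1 = {}"
  by (simp add: rpoly_vars_def)

lemma vars_pconst [simp]: "rpoly_vars (pconst c) = {}"
  by (simp add: rpoly_vars_def pconst_def)

lemma vars_pvar [simp]: "rpoly_vars (pvar m) = {m}"
  by (simp add: rpoly_vars_def pvar_def)

lemma vars_power: "rpoly_vars p \<subseteq> V \<Longrightarrow> rpoly_vars (p ^ n) \<subseteq> V"
  by (induction n) (use vars_mult in fastforce)+

lemma vars_prod: "(\<And>i. i \<in> A \<Longrightarrow> rpoly_vars (p i) \<subseteq> V) \<Longrightarrow> rpoly_vars (\<Prod>i\<in>A. p i) \<subseteq> V"
  by (induction A rule: infinite_finite_induct) (use vars_mult in fastforce)+

definition pcomp :: "nat rpoly \<Rightarrow> (nat \<Rightarrow> 'w rpoly) \<Rightarrow> 'w rpoly" where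
  "pcomp P zz = (\<Sum>\<alpha>\<in>Poly_Mapping.keys P. pconst (Poly_Mapping.lookup P \<alpha>) *
      (\<Prod>v\<in>Poly_Mapping.keys \<alpha>. zz v ^ Poly_Mapping.lookup \<alpha> v))"

lemma eval_pcomp: "rpoly_eval (pcomp P zz) y = rpoly_eval P (\<lambda>v. rpoly_eval (zz v) y)"
  unfolding pcomp_def eval_sum eval_mult eval_prod eval_power eval_pconst
  by (simp add: rpoly_eval_def[of P])

lemma n1_pcomp:
  assumes "\<And>v. v \<in> rpoly_vars P \<Longrightarrow> n1 (zz v) \<le> B" "1 \<le> B" "rpoly_deg_le P K"
  shows "n1 (pcomp P zz) \<le> n1 P * B ^ K"
proof -
  have "n1 (pcomp P zz) \<le> (\<Sum>\<alpha>\<in>Poly_Mapping.keys P. n1 (pconst (Poly_Mapping.lookup P \<alpha>) *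
      (\<Prod>v\<in>Poly_Mapping.keys \<alpha>. zz v ^ Poly_Mapping.lookup \<alpha> v)))"
    unfolding pcomp_def by (rule n1_sum)
  also have "\<dots> \<le> (\<Sum>\<alpha>\<in>Poly_Mapping.keys P. \<bar>Poly_Mapping.lookup P \<alpha>\<bar> * B ^ K)"
  proof (rule sum_mono)
    fix \<alpha> assume a: "\<alpha> \<in> Poly_Mapping.keys P"
    have "n1 (\<Prod>v\<in>Poly_Mapping.keys \<alpha>. zz v ^ Poly_Mapping.lookup \<alpha> v)
        \<le> (\<Prod>v\<in>Poly_Mapping.keys \<alpha>. n1 (zz v ^ Poly_Mapping.lookup \<alpha> v))" by (rule n1_prod)
    also have "\<dots> \<le> (\<Prod>v\<in>Poly_Mapping.keys \<alpha>. B ^ Poly_Mapping.lookup \<alpha> v)"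
    proof (rule prod_mono)
      fix v assume v: "v \<in> Poly_Mapping.keys \<alpha>"
      have "v \<in> rpoly_vars P" using a v by (auto simp: rpoly_vars_def)
      then have "n1 (zz v) \<le> B" by (rule assms(1))
      then have "n1 (zz v) ^ Poly_Mapping.lookup \<alpha> v \<le> B ^ Poly_Mapping.lookup \<alpha> v"
        by (intro power_mono n1_nonneg)
      then show "0 \<le> n1 (zz v ^ Poly_Mapping.lookup \<alpha> v) \<and> n1 (zz v ^ Poly_Mapping.lookup \<alpha> v) \<le> B ^ Poly_Mapping.lookup \<alpha> v"
        using n1_power[of "zz v" "Poly_Mapping.lookup \<alpha> v"] n1_nonneg by auto
    qed
    also have "\<dots> = B ^ mono_deg \<alpha>" by (simp add: mono_deg_def power_sum)
    also have "\<dots> \<le> B ^ K" using assms(2,3) a by (intro power_increasing) (auto simp: rpoly_deg_le_def)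
    finally have "n1 (\<Prod>v\<in>Poly_Mapping.keys \<alpha>. zz v ^ Poly_Mapping.lookup \<alpha> v) \<le> B ^ K" .
    then show "n1 (pconst (Poly_Mapping.lookup P \<alpha>) * (\<Prod>v\<in>Poly_Mapping.keys \<alpha>. zz v ^ Poly_Mapping.lookup \<alpha> v))
        \<le> \<bar>Poly_Mapping.lookup P \<alpha>\<bar> * B ^ K"
      using n1_mult[of "pconst (Poly_Mapping.lookup P \<alpha>)"] 
      by (smt (verit, best) abs_ge_zero mult_left_mono n1_pconst)
  qed
  also have "\<dots> = n1 P * B ^ K" by (simp add: n1_def sum_distrib_right)
  finally show ?thesis .
qed

lemma deg_le_pcomp:
  assumes "\<And>v. rpoly_deg_le (zz v) 1" "rpoly_deg_le P K"
  shows "rpoly_deg_le (pcomp P zz) K"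
  unfolding pcomp_def
proof (rule deg_le_sum)
  fix \<alpha> assume a: "\<alpha> \<in> Poly_Mapping.keys P"
  have "rpoly_deg_le (\<Prod>v\<in>Poly_Mapping.keys \<alpha>. zz v ^ Poly_Mapping.lookup \<alpha> v)
          (\<Sum>v\<in>Poly_Mapping.keys \<alpha>. Poly_Mapping.lookup \<alpha> v * 1)"
    by (intro deg_le_prod deg_le_power assms(1))
  then have "rpoly_deg_le (\<Prod>v\<in>Poly_Mapping.keys \<alpha>. zz v ^ Poly_Mapping.lookup \<alpha> v) K"
    using assms(2) a by (elim deg_le_mono) (auto simp: rpoly_deg_le_def mono_deg_def)
  then show "rpoly_deg_le (pconst (Poly_Mapping.lookup P \<alpha>) * (\<Prod>v\<in>Poly_Mapping.keys \<alpha>. zz v ^ Poly_Mapping.lookup \<alpha> v)) K"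
    using deg_le_mult[OF deg_le_pconst[of _ 0]] by fastforce
qed

lemma vars_pconst_mult: "rpoly_vars (pconst c * q) \<subseteq> rpoly_vars q"
  using vars_mult[of "pconst c" q] by simp

lemma vars_pcomp:
  assumes "\<And>v. v \<in> rpoly_vars P \<Longrightarrow> rpoly_vars (zz v) \<subseteq> V"
  shows "rpoly_vars (pcomp P zz) \<subseteq> V"
  unfolding pcomp_def
proof (rule vars_sum)
  fix \<alpha> assume a: "\<alpha> \<in> Poly_Mapping.keys P"
  have "rpoly_vars (\<Prod>v\<in>Poly_Mapping.keys \<alpha>. zz v ^ Poly_Mapping.lookup \<alpha> v) \<subseteq> V"
    by (rule vars_prod, rule vars_power, rule assms) (use a in \<open>auto simp: rpoly_vars_def\<close>)
  then show "rpoly_vars (pconst (Poly_Mapping.lookup P \<alpha>) * (\<Prod>v\<in>Poly_Mapping.keys \<alpha>. zz v ^ Poly_Mapping.lookup \<alpha> v)) \<subseteq> V"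
    by (rule order_trans[OF vars_pconst_mult])
qed

lemma cube_0: "cube 0 = {\<lambda>_. 0}"
  by (auto simp: cube_def)

lemma cube_Suc: "cube (Suc d) = (\<lambda>(x,s). x(d := s)) ` (cube d \<times> {-1,1})"
proof (intro equalityI subsetI)
  fix y assume y: "y \<in> cube (Suc d)"
  have "y(d := 0) \<in> cube d" "y d \<in> {-1,1}" using y by (auto simp: cube_def)
  moreover have "y = (y(d := 0))(d := y d)" by simp
  ultimately show "y \<in> (\<lambda>(x,s). x(d := s)) ` (cube d \<times> {-1,1})"
    by (intro image_eqI[of _ _ "(y(d:=0), y d)"]) auto
next
  fix y assume "y \<in> (\<lambda>(x,s). x(d := s)) ` (cube d \<times> {-1,1})"
  then obtain x s where xs: "x \<in> cube d" "s \<in> {-1,1}" "y = x(d:=s)" by auto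
  show "y \<in> cube (Suc d)" unfolding cube_def
  proof (intro CollectI conjI allI impI)
    fix l assume "l < Suc d" then show "y l \<in> {-1,1}" using xs by (cases "l = d") (auto simp: cube_def)
  next
    fix l assume "Suc d \<le> l" then show "y l = 0" using xs by (auto simp: cube_def)
  qed
qed

lemma inj_cube_Suc: "inj_on (\<lambda>(x,s). x(d := s)) (cube d \<times> {-1,1})"
proof (rule inj_onI, clarify)
  fix x s x' s'
  assume a: "x \<in> cube d" "x' \<in> cube d" "x(d := s) = x'(d := s')"
  then have "s = s'" by (metis fun_upd_same)
  moreover have "x = x'"
  proof
    fix l
    show "x l = x' l"
    proof (cases "l = d")
      case True then show ?thesis using a by (auto simp: cube_def)
    next
      case False then show ?thesis using fun_cong[OF a(3), of l] by simp
    qed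
  qed
  ultimately show "x = x' \<and> s = s'" by simp
qed

lemma finite_cube [simp]: "finite (cube d)"
  by (induction d) (auto simp: cube_0 cube_Suc)

lemma sum_cube_Suc:
  "(\<Sum>y\<in>cube (Suc d). f y) = (\<Sum>x\<in>cube d. f (x(d := 1)) + f (x(d := -1)))"
proof -
  have "(\<Sum>y\<in>cube (Suc d). f y) = (\<Sum>(x,s)\<in>cube d \<times> {-1,1}. f (x(d := s)))"
    unfolding cube_Suc by (subst sum.reindex[OF inj_cube_Suc]) (simp add: case_prod_unfold)
  also have "\<dots> = (\<Sum>x\<in>cube d. \<Sum>s\<in>{-1,1::real}. f (x(d := s)))"
    by (rule sum.cartesian_product[symmetric])
  also have "\<dots> = (\<Sum>x\<in>cube d. f (x(d := 1)) + f (x(d := -1)))"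
    by (simp add: add.commute)
  finally show ?thesis .
qed

lemma card_cube: "card (cube d) = 2 ^ d"
proof (induction d)
  case 0 then show ?case by (simp add: cube_0)
next
  case (Suc d)
  have "real (card (cube (Suc d))) = (\<Sum>y\<in>cube (Suc d). 1)" by simp
  also have "\<dots> = 2 * real (card (cube d))" by (subst sum_cube_Suc) simp
  finally have "real (card (cube (Suc d))) = real (2 ^ Suc d)" using Suc by simp
  then show ?case by (simp only: of_nat_eq_iff)
qed

lemma cube_nonempty: "cube d \<noteq> {}"
  using card_cube[of d] by auto

lemma cube_val: "x \<in> cube d \<Longrightarrow> l < d \<Longrightarrow> x l = 1 \<or> x l = -1"
  by (auto simp: cube_def)

lemma cube_sq: "x \<in> cube d \<Longrightarrow> l < d \<Longrightarrow> x l * x l = 1"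
  using cube_val by fastforce

definition chi :: "nat set \<Rightarrow> (nat \<Rightarrow> real) \<Rightarrow> real" where
  "chi T x = (\<Prod>v\<in>T. x v)"

definition flip :: "nat \<Rightarrow> (nat \<Rightarrow> real) \<Rightarrow> (nat \<Rightarrow> real)" where
  "flip v x = x(v := - x v)"

lemma flip_cube: "v < d \<Longrightarrow> x \<in> cube d \<Longrightarrow> flip v x \<in> cube d"
  by (auto simp: flip_def cube_def)

lemma flip_flip [simp]: "flip v (flip v x) = x"
  by (simp add: flip_def)

lemma sum_cube_flip: "v < d \<Longrightarrow> (\<Sum>x\<in>cube d. f (flip v x)) = (\<Sum>x\<in>cube d. f x)"
  by (rule sum.reindex_bij_witness[of _ "flip v" "flip v"]) (auto simp: flip_cube flip_flip)

lemma chi_flip: "finite T \<Longrightarrow> chi T (flip v x) = (if v \<in> T then - chi T x else chi T x)"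
proof (cases "v \<in> T")
  case True
  assume f: "finite T"
  have "chi T (flip v x) = flip v x v * (\<Prod>u\<in>T - {v}. flip v x u)"
    unfolding chi_def using f True by (simp add: prod.remove)
  also have "(\<Prod>u\<in>T - {v}. flip v x u) = (\<Prod>u\<in>T - {v}. x u)"
    by (rule prod.cong) (auto simp: flip_def)
  also have "flip v x v * (\<Prod>u\<in>T - {v}. x u) = - chi T x"
    unfolding chi_def using f True by (simp add: prod.remove flip_def)
  finally show ?thesis using True by simp
next
  case False
  have "chi T (flip v x) = chi T x" unfolding chi_def flip_def using False by (intro prod.cong) auto
  then show ?thesis using False by simp
qed

lemma chi_sq: "x \<in> cube d \<Longrightarrow> T \<subseteq> {..<d} \<Longrightarrow> chi T x * chi T x = 1"
proof -
  assume x: "x \<in> cube d" and T: "T \<subseteq> {..<d}"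
  have "chi T x * chi T x = (\<Prod>v\<in>T. x v * x v)" by (simp add: chi_def prod.distrib)
  also have "\<dots> = 1" using x T by (intro prod.neutral) (auto intro: cube_sq)
  finally show ?thesis .
qed

lemma chi_orth:
  assumes "S \<subseteq> {..<d}" "T \<subseteq> {..<d}" "S \<noteq> T"
  shows "(\<Sum>x\<in>cube d. chi S x * chi T x) = 0"
proof -
  obtain v where v: "v \<in> S \<and> v \<notin> T \<or> v \<in> T \<and> v \<notin> S" using assms(3) by blast
  have fin: "finite S" "finite T" using assms(1,2) finite_subset by auto
  have vd: "v < d" using v assms by auto
  have "(\<Sum>x\<in>cube d. chi S x * chi T x) = (\<Sum>x\<in>cube d. chi S (flip v x) * chi T (flip v x))"
    using sum_cube_flip[OF vd, of "\<lambda>x. chi S x * chi T x"] by simp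
  also have "\<dots> = - (\<Sum>x\<in>cube d. chi S x * chi T x)"
    using v fin by (auto simp: chi_flip sum_negf)
  finally show ?thesis by simp
qed

lemma multilinear_lookup:
  "multilinear P \<Longrightarrow> \<alpha> \<in> Poly_Mapping.keys P \<Longrightarrow> Poly_Mapping.lookup \<alpha> v = (if v \<in> Poly_Mapping.keys \<alpha> then 1 else 0)"
proof -
  assume ml: "multilinear P" and a: "\<alpha> \<in> Poly_Mapping.keys P"
  have "Poly_Mapping.lookup \<alpha> v \<le> 1" using ml a unfolding multilinear_def by blast
  then show ?thesis by (cases "v \<in> Poly_Mapping.keys \<alpha>") (auto simp: in_keys_iff)
qed

lemma multilinear_keys_inj:
  "multilinear P \<Longrightarrow> inj_on Poly_Mapping.keys (Poly_Mapping.keys P)"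
  by (rule inj_onI, rule poly_mapping_eqI) (metis multilinear_lookup)

lemma mon_multilinear:
  "multilinear P \<Longrightarrow> \<alpha> \<in> Poly_Mapping.keys P \<Longrightarrow> mon \<alpha> x = chi (Poly_Mapping.keys \<alpha>) x"
  unfolding mon_def chi_def by (intro prod.cong) (auto simp: multilinear_lookup)

lemma keys_vars: "\<alpha> \<in> Poly_Mapping.keys P \<Longrightarrow> Poly_Mapping.keys \<alpha> \<subseteq> rpoly_vars P"
  by (auto simp: rpoly_vars_def)

lemma parseval:
  assumes ext: "is_multilinear_ext d g P" and pm: "\<forall>x\<in>cube d. g x \<in> {-1,1}"
  shows "(\<Sum>\<alpha>\<in>Poly_Mapping.keys P. (Poly_Mapping.lookup P \<alpha>)^2) = 1"
proof -
  let ?c = "Poly_Mapping.lookup P" and ?A = "Poly_Mapping.keys P"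
  have ml: "multilinear P" and vars: "rpoly_vars P \<subseteq> {..<d}" and ev: "\<forall>x\<in>cube d. rpoly_eval P x = g x"
    using ext by (auto simp: is_multilinear_ext_def)
  have ks: "\<And>\<alpha>. \<alpha> \<in> ?A \<Longrightarrow> Poly_Mapping.keys \<alpha> \<subseteq> {..<d}" using vars keys_vars by blast
  have evx: "rpoly_eval P x = (\<Sum>\<alpha>\<in>?A. ?c \<alpha> * chi (Poly_Mapping.keys \<alpha>) x)" for x
    unfolding rpoly_eval_def using mon_multilinear[OF ml] by (simp add: mon_def[symmetric])
  have "(\<Sum>x\<in>cube d. (rpoly_eval P x)^2) = (\<Sum>x\<in>cube d. 1)"
    by (rule sum.cong) (use ev pm in auto)
  then have "real (card (cube d)) = (\<Sum>x\<in>cube d. (rpoly_eval P x)^2)" by simp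
  also have "\<dots> = (\<Sum>x\<in>cube d. \<Sum>\<alpha>\<in>?A. \<Sum>\<beta>\<in>?A. ?c \<alpha> * ?c \<beta> * (chi (Poly_Mapping.keys \<alpha>) x * chi (Poly_Mapping.keys \<beta>) x))"
    by (simp add: evx power2_eq_square sum_product mult_ac)
  also have "\<dots> = (\<Sum>\<alpha>\<in>?A. \<Sum>\<beta>\<in>?A. ?c \<alpha> * ?c \<beta> * (\<Sum>x\<in>cube d. chi (Poly_Mapping.keys \<alpha>) x * chi (Poly_Mapping.keys \<beta>) x))"
    by (simp add: sum.swap[of _ "cube d"] sum_distrib_left)
  also have "\<dots> = (\<Sum>\<alpha>\<in>?A. ?c \<alpha> * ?c \<alpha> * real (card (cube d)))"
  proof (rule sum.cong[OF refl])
    fix \<alpha> assume a: "\<alpha> \<in> ?A"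
    have "(\<Sum>\<beta>\<in>?A. ?c \<alpha> * ?c \<beta> * (\<Sum>x\<in>cube d. chi (Poly_Mapping.keys \<alpha>) x * chi (Poly_Mapping.keys \<beta>) x))
        = (\<Sum>\<beta>\<in>{\<alpha>}. ?c \<alpha> * ?c \<beta> * (\<Sum>x\<in>cube d. chi (Poly_Mapping.keys \<alpha>) x * chi (Poly_Mapping.keys \<beta>) x))"
    proof (rule sum.mono_neutral_right)
      show "\<forall>\<beta>\<in>?A - {\<alpha>}. ?c \<alpha> * ?c \<beta> * (\<Sum>x\<in>cube d. chi (Poly_Mapping.keys \<alpha>) x * chi (Poly_Mapping.keys \<beta>) x) = 0"
      proof
        fix \<beta> assume b: "\<beta> \<in> ?A - {\<alpha>}"
        have "Poly_Mapping.keys \<alpha> \<noteq> Poly_Mapping.keys \<beta>"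
          using multilinear_keys_inj[OF ml] a b by (auto dest: inj_onD)
        then show "?c \<alpha> * ?c \<beta> * (\<Sum>x\<in>cube d. chi (Poly_Mapping.keys \<alpha>) x * chi (Poly_Mapping.keys \<beta>) x) = 0"
          using chi_orth[OF ks[OF a] ks] b by simp
      qed
    qed (use a in auto)
    also have "\<dots> = ?c \<alpha> * ?c \<alpha> * real (card (cube d))"
      using chi_sq[OF _ ks[OF a]] by simp
    finally show "(\<Sum>\<beta>\<in>?A. ?c \<alpha> * ?c \<beta> * (\<Sum>x\<in>cube d. chi (Poly_Mapping.keys \<alpha>) x * chi (Poly_Mapping.keys \<beta>) x))
        = ?c \<alpha> * ?c \<alpha> * real (card (cube d))" .
  qed
  also have "\<dots> = (\<Sum>\<alpha>\<in>?A. (?c \<alpha>)^2) * real (card (cube d))"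
    by (simp add: sum_distrib_right power2_eq_square)
  finally show ?thesis using card_cube[of d] by simp
qed

lemma card_small_subsets:
  assumes "d \<ge> 1"
  shows "card {T. T \<subseteq> {..<d} \<and> card T \<le> K} \<le> (K+1) * d ^ K"
proof -
  have "{T. T \<subseteq> {..<d} \<and> card T \<le> K} = (\<Union>s\<in>{..K}. {T. T \<subseteq> {..<d} \<and> card T = s})" by auto
  then have "card {T. T \<subseteq> {..<d} \<and> card T \<le> K} \<le> (\<Sum>s\<in>{..K}. card {T. T \<subseteq> {..<d} \<and> card T = s})"
    by (simp add: card_UN_le)
  also have "\<dots> = (\<Sum>s\<in>{..K}. d choose s)" by (simp add: n_subsets)
  also have "\<dots> \<le> (\<Sum>s\<in>{..K}. d ^ K)"
  proof (rule sum_mono)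
    fix s assume "s \<in> {..K}"
    then have "d choose s \<le> d ^ s" "d ^ s \<le> d ^ K" using assms
      by (cases "s \<le> d", auto simp: binomial_le_pow power_increasing binomial_eq_0)
    then show "d choose s \<le> d ^ K" by linarith
  qed
  finally show ?thesis by simp
qed

lemma card_keys_ml:
  assumes ml: "multilinear P" and vars: "rpoly_vars P \<subseteq> {..<d}" and deg: "rpoly_deg_le P K" and d: "d \<ge> 1"
  shows "card (Poly_Mapping.keys P) \<le> (K+1) * d ^ K"
proof -
  have "card (Poly_Mapping.keys P) = card (Poly_Mapping.keys ` Poly_Mapping.keys P)"
    using card_image[OF multilinear_keys_inj[OF ml]] by simp
  also have "\<dots> \<le> card {T. T \<subseteq> {..<d} \<and> card T \<le> K}"
  proof (rule card_mono)
    show "finite {T. T \<subseteq> {..<d} \<and> card T \<le> K}" by simp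
    show "Poly_Mapping.keys ` Poly_Mapping.keys P \<subseteq> {T. T \<subseteq> {..<d} \<and> card T \<le> K}"
    proof clarify
      fix \<alpha> assume a: "\<alpha> \<in> Poly_Mapping.keys P"
      have "mono_deg \<alpha> = card (Poly_Mapping.keys \<alpha>)"
        unfolding mono_deg_def using multilinear_lookup[OF ml a] by simp
      then show "Poly_Mapping.keys \<alpha> \<subseteq> {..<d} \<and> card (Poly_Mapping.keys \<alpha>) \<le> K"
        using deg a vars keys_vars[OF a] by (auto simp: rpoly_deg_le_def)
    qed
  qed
  also have "\<dots> \<le> (K+1) * d ^ K" by (rule card_small_subsets[OF d])
  finally show ?thesis .
qed

lemma n1_ml_bound:
  assumes ext: "is_multilinear_ext d g P" and pm: "\<forall>x\<in>cube d. g x \<in> {-1,1}"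
    and deg: "rpoly_deg_le P K" and d: "d \<ge> 1"
  shows "n1 P \<le> sqrt (real ((K+1) * d ^ K))"
proof -
  let ?c = "Poly_Mapping.lookup P" and ?A = "Poly_Mapping.keys P"
  have "(n1 P)^2 \<le> (\<Sum>\<alpha>\<in>?A. \<bar>?c \<alpha>\<bar>^2) * real (card ?A)"
    unfolding n1_def by (rule sum_squared_le_sum_of_squares)
  also have "\<dots> = real (card ?A)" using parseval[OF ext pm] by simp
  also have "\<dots> \<le> real ((K+1) * d ^ K)"
  proof -
    have "card ?A \<le> (K+1) * d ^ K"
      using card_keys_ml[OF _ _ deg d] ext by (auto simp: is_multilinear_ext_def)
    then show ?thesis by (simp only: of_nat_le_iff)
  qed
  finally show ?thesis using n1_nonneg by (simp add: real_le_rsqrt)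
qed

definition Sd :: "nat \<Rightarrow> (nat \<Rightarrow> real) \<Rightarrow> (nat \<Rightarrow> real) \<Rightarrow> real" where
  "Sd d a x = (\<Sum>l<d. a l * x l)"

lemma Sd_upd: "x \<in> cube d \<Longrightarrow> Sd (Suc d) a (x(d := t)) = Sd d a x + a d * t"
  unfolding Sd_def by (simp add: sum.lessThan_Suc)

lemma Sd_upd1: "x \<in> cube d \<Longrightarrow> Sd (Suc d) a (x(d := 1)) = Sd d a x + a d"
  using Sd_upd[of x d a 1] by simp

lemma Sd_upd2: "x \<in> cube d \<Longrightarrow> Sd (Suc d) a (x(d := -1)) = Sd d a x - a d"
  using Sd_upd[of x d a "-1"] by simp

lemma moment2: "(\<Sum>x\<in>cube d. (Sd d a x)^2) = 2 ^ d * (\<Sum>l<d. (a l)^2)"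
proof (induction d)
  case 0 then show ?case by (simp add: cube_0 Sd_def)
next
  case (Suc d)
  have "(\<Sum>x\<in>cube (Suc d). (Sd (Suc d) a x)^2) = (\<Sum>x\<in>cube d. (Sd d a x + a d)^2 + (Sd d a x - a d)^2)"
    by (subst sum_cube_Suc) (intro sum.cong, auto simp: Sd_upd)
  also have "\<dots> = (\<Sum>x\<in>cube d. 2 * (Sd d a x)^2 + 2 * (a d)^2)"
    by (intro sum.cong) (auto simp: power2_eq_square algebra_simps)
  also have "\<dots> = 2 * (\<Sum>x\<in>cube d. (Sd d a x)^2) + 2 ^ d * 2 * (a d)^2"
    by (simp add: sum.distrib sum_distrib_left card_cube)
  finally show ?case using Suc by (simp add: sum.lessThan_Suc algebra_simps)
qed

lemma aux4a: "((S::real) + a)^4 + (S - a)^4 = 2 * S^4 + 12 * a^2 * S^2 + 2 * (a^2)^2"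
  by algebra

lemma aux4b: "(N::real) \<ge> 0 \<Longrightarrow> 2 * (3 * N * s^2) + 12 * b * (N * s) + N * 2 * b^2 \<le> 3 * (2 * N) * (s + b)^2"
proof -
  assume "N \<ge> 0"
  then have "0 \<le> N * b^2" by simp
  moreover have "3 * (2 * N) * (s + b)^2 = 2 * (3 * N * s^2) + 12 * b * (N * s) + N * 2 * b^2 + 4 * (N * b^2)"
    by algebra
  ultimately show ?thesis by linarith
qed

lemma moment4: "(\<Sum>x\<in>cube d. (Sd d a x)^4) \<le> 3 * 2 ^ d * (\<Sum>l<d. (a l)^2)^2"
proof (induction d)
  case 0 then show ?case by (simp add: cube_0 Sd_def)
next
  case (Suc d)
  let ?s = "\<Sum>l<d. (a l)^2" and ?b = "(a d)^2"
  have "(\<Sum>x\<in>cube (Suc d). (Sd (Suc d) a x)^4) = (\<Sum>x\<in>cube d. (Sd (Suc d) a (x(d:=1)))^4 + (Sd (Suc d) a (x(d:=-1)))^4)"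
    by (rule sum_cube_Suc)
  also have "\<dots> = (\<Sum>x\<in>cube d. (Sd d a x + a d)^4 + (Sd d a x - a d)^4)"
    by (intro sum.cong refl) (simp only: Sd_upd1 Sd_upd2)
  also have "\<dots> = (\<Sum>x\<in>cube d. 2 * (Sd d a x)^4 + 12 * ?b * (Sd d a x)^2 + 2 * ?b^2)"
    by (intro sum.cong refl) (rule aux4a)
  also have "\<dots> = 2 * (\<Sum>x\<in>cube d. (Sd d a x)^4) + 12 * ?b * (\<Sum>x\<in>cube d. (Sd d a x)^2) + 2 ^ d * 2 * ?b^2"
    by (simp add: sum.distrib sum_distrib_left card_cube)
  also have "\<dots> \<le> 2 * (3 * 2 ^ d * ?s^2) + 12 * ?b * (2 ^ d * ?s) + 2 ^ d * 2 * ?b^2"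
    unfolding moment2[of d a] using Suc.IH by linarith
  also have "\<dots> \<le> 3 * 2 ^ Suc d * (?s + ?b)^2"
    using aux4b[of "2 ^ d" ?s ?b] by simp
  finally show ?case by (simp add: sum.lessThan_Suc)
qed

lemma sq_le_tau: "(\<tau>::real) > 0 \<Longrightarrow> S^2 \<le> \<tau> * \<bar>S\<bar> + S^4 / \<tau>^2"
proof (cases "\<bar>S\<bar> \<le> \<tau>")
  case True
  assume t: "\<tau> > 0"
  have "S^2 = \<bar>S\<bar> * \<bar>S\<bar>" by (simp add: power2_eq_square)
  also have "\<dots> \<le> \<tau> * \<bar>S\<bar>" by (rule mult_right_mono) (use True in auto)
  finally have "S^2 \<le> \<tau> * \<bar>S\<bar>" .
  moreover have "S^4 / \<tau>^2 \<ge> 0" by simp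
  ultimately show ?thesis by linarith
next
  case False
  assume t: "\<tau> > 0"
  have "\<tau>^2 \<le> \<bar>S\<bar>^2" using False t by (intro power_mono) auto
  then have t2: "\<tau>^2 \<le> S^2" by simp
  have "S^2 * \<tau>^2 \<le> S^2 * S^2" by (rule mult_left_mono[OF t2]) simp
  then have "S^2 * \<tau>^2 \<le> S^4" by (simp add: power4_eq_xxxx power2_eq_square mult.assoc)
  then have "S^2 \<le> S^4 / \<tau>^2" using t by (simp add: pos_le_divide_eq)
  moreover have "\<tau> * \<bar>S\<bar> \<ge> 0" using t by simp
  ultimately show ?thesis by linarith
qed

lemma khintchine:
  "(\<Sum>x\<in>cube d. \<bar>Sd d a x\<bar>) \<ge> 2 ^ d * sqrt (\<Sum>l<d. (a l)^2) / 5"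
proof -
  let ?s = "\<Sum>l<d. (a l)^2" and ?N = "(2::real) ^ d"
  show ?thesis
  proof (cases "?s = 0")
    case True then show ?thesis by (simp add: sum_nonneg)
  next
    case False
    then have s: "?s > 0" using sum_nonneg[of "{..<d}" "\<lambda>l. (a l)^2"] by auto
    define \<tau> where "\<tau> = sqrt (6 * ?s)"
    have t: "\<tau> > 0" using s by (simp add: \<tau>_def)
    have t2: "\<tau>^2 = 6 * ?s" using s by (simp add: \<tau>_def)
    have "?N * ?s = (\<Sum>x\<in>cube d. (Sd d a x)^2)" by (simp add: moment2)
    also have "\<dots> \<le> (\<Sum>x\<in>cube d. \<tau> * \<bar>Sd d a x\<bar> + (Sd d a x)^4 / \<tau>^2)"
      by (rule sum_mono) (rule sq_le_tau[OF t])
    also have "\<dots> = \<tau> * (\<Sum>x\<in>cube d. \<bar>Sd d a x\<bar>) + (\<Sum>x\<in>cube d. (Sd d a x)^4) / \<tau>^2"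
      by (simp add: sum.distrib sum_distrib_left sum_divide_distrib)
    also have "\<dots> \<le> \<tau> * (\<Sum>x\<in>cube d. \<bar>Sd d a x\<bar>) + 3 * ?N * ?s^2 / \<tau>^2"
      using moment4[of d a] t by (simp add: divide_right_mono)
    also have "3 * ?N * ?s^2 / \<tau>^2 = 3 * ?N * ?s^2 / (6 * ?s)" by (simp only: t2)
    also have "\<dots> = ?N * ?s / 2" using s by (simp add: power2_eq_square field_simps)
    finally have "?N * ?s / 2 \<le> \<tau> * (\<Sum>x\<in>cube d. \<bar>Sd d a x\<bar>)" by simp
    then have A: "?N * ?s / (2 * \<tau>) \<le> (\<Sum>x\<in>cube d. \<bar>Sd d a x\<bar>)" using t by (simp add: field_simps)
    have ss: "?s = sqrt ?s * sqrt ?s" using s by simp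
    have st: "\<tau> = sqrt 6 * sqrt ?s" by (simp add: \<tau>_def real_sqrt_mult)
    have sp: "sqrt ?s > 0" using s by simp
    have "?N * ?s / (2 * \<tau>) = ?N * sqrt ?s / (2 * sqrt 6)"
      by (subst ss, subst st) (use sp in \<open>simp add: field_simps\<close>)
    moreover have "?N * sqrt ?s / 5 \<le> ?N * sqrt ?s / (2 * sqrt 6)"
    proof -
      have "sqrt 6 \<le> sqrt ((5/2::real)^2)" by (intro real_sqrt_le_mono) (simp add: power2_eq_square)
      then have "2 * sqrt 6 \<le> (5::real)" by simp
      then show ?thesis using s by (intro divide_left_mono) auto
    qed
    ultimately show ?thesis using A by linarith
  qed
qed

lemma Wdk_val: "w \<in> Wdk d k \<Longrightarrow> w l = -1 \<or> w l = 0 \<or> w l = 1"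
  unfolding Wdk_def by (cases "l < d") auto

lemma Wdk_sq: "w \<in> Wdk d k \<Longrightarrow> w l * w l = \<bar>w l\<bar>"
  using Wdk_val[of w d k l] by auto

lemma Wdk_abs_le: "w \<in> Wdk d k \<Longrightarrow> \<bar>w l\<bar> \<le> 1"
  using Wdk_val[of w d k l] by auto

lemma Wdk_sum: "w \<in> Wdk d k \<Longrightarrow> (\<Sum>l<d. \<bar>w l\<bar>) = real k"
  unfolding Wdk_def by auto

lemma Wdk_out: "w \<in> Wdk d k \<Longrightarrow> l \<ge> d \<Longrightarrow> w l = 0"
  unfolding Wdk_def by auto

lemma finite_Wdk [simp]: "finite (Wdk d k)"
proof -
  have "Wdk d k \<subseteq> (\<lambda>f l. if l < d then f l else 0) ` PiE {..<d} (\<lambda>_. {-1,0,1::real})"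
  proof
    fix w assume w: "w \<in> Wdk d k"
    show "w \<in> (\<lambda>f l. if l < d then f l else 0) ` PiE {..<d} (\<lambda>_. {-1,0,1::real})"
    proof (rule image_eqI[of _ _ "restrict w {..<d}"])
      show "w = (\<lambda>l. if l < d then restrict w {..<d} l else 0)"
        by (rule ext) (simp add: Wdk_out[OF w])
      show "restrict w {..<d} \<in> PiE {..<d} (\<lambda>_. {-1,0,1::real})"
        using w by (auto simp: Wdk_def)
    qed
  qed
  moreover have "finite (PiE {..<d} (\<lambda>_. {-1,0,1::real}))" by (intro finite_PiE) auto
  ultimately show ?thesis by (meson finite_imageI finite_subset)
qed

lemma Wdk_nonempty: "k \<le> d \<Longrightarrow> Wdk d k \<noteq> {}"
proof -
  assume kd: "k \<le> d"
  let ?w = "\<lambda>l. if l < k then (1::real) else 0"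
  have "(\<Sum>l<d. \<bar>?w l\<bar>) = (\<Sum>l<k. 1)"
    using kd by (intro sum.mono_neutral_cong_right) auto
  then have "?w \<in> Wdk d k" using kd by (auto simp: Wdk_def)
  then show ?thesis by auto
qed

definition wflip :: "(nat \<Rightarrow> real) \<Rightarrow> (nat \<Rightarrow> real) \<Rightarrow> (nat \<Rightarrow> real)" where
  "wflip z w = (\<lambda>m. w m * z m)"

lemma wflip_Wdk: "z \<in> cube d \<Longrightarrow> w \<in> Wdk d k \<Longrightarrow> wflip z w \<in> Wdk d k"
proof -
  assume z: "z \<in> cube d" and w: "w \<in> Wdk d k"
  have a: "\<bar>w m * z m\<bar> = \<bar>w m\<bar>" if "m < d" for m
    using cube_val[OF z that] by auto
  have s: "(\<Sum>m<d. \<bar>w m * z m\<bar>) = real k" using Wdk_sum[OF w] by (simp add: a)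
  have v: "\<forall>l<d. w l * z l \<in> {-1,0,1}"
  proof (intro allI impI)
    fix l assume l: "l < d"
    show "w l * z l \<in> {-1,0,1}" using Wdk_val[OF w, of l] cube_val[OF z l] by auto
  qed
  have o: "\<forall>l\<ge>d. w l * z l = 0" using Wdk_out[OF w] by simp
  show ?thesis unfolding wflip_def Wdk_def using v o s by simp
qed

lemma wflip_wflip: "z \<in> cube d \<Longrightarrow> w \<in> Wdk d k \<Longrightarrow> wflip z (wflip z w) = w"
proof
  fix m assume z: "z \<in> cube d" and w: "w \<in> Wdk d k"
  show "wflip z (wflip z w) m = w m"
  proof (cases "m < d")
    case True then show ?thesis using cube_sq[OF z True] by (simp add: wflip_def mult.assoc)
  next
    case False then show ?thesis using Wdk_out[OF w] by (simp add: wflip_def)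
  qed
qed

lemma sum_Wdk_wflip: "z \<in> cube d \<Longrightarrow> (\<Sum>w\<in>Wdk d k. h (wflip z w)) = (\<Sum>w\<in>Wdk d k. h w)"
  by (rule sum.reindex_bij_witness[of _ "wflip z" "wflip z"]) (auto simp: wflip_Wdk wflip_wflip)

definition tr :: "nat \<Rightarrow> nat \<Rightarrow> nat \<Rightarrow> nat" where
  "tr l l' m = (if m = l then l' else if m = l' then l else m)"

lemma tr_tr [simp]: "tr l l' (tr l l' m) = m"
  by (simp add: tr_def)

lemma tr_lt: "l < d \<Longrightarrow> l' < d \<Longrightarrow> m < d \<Longrightarrow> tr l l' m < d"
  by (simp add: tr_def)

lemma tr_ge: "l < d \<Longrightarrow> l' < d \<Longrightarrow> m \<ge> d \<Longrightarrow> tr l l' m = m"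
  by (simp add: tr_def)

lemma sum_tr: "l < d \<Longrightarrow> l' < d \<Longrightarrow> (\<Sum>m<d. f (tr l l' m)) = (\<Sum>m<d. f m)"
  by (rule sum.reindex_bij_witness[of _ "tr l l'" "tr l l'"]) (auto simp: tr_lt)

lemma wswap_Wdk: "l < d \<Longrightarrow> l' < d \<Longrightarrow> w \<in> Wdk d k \<Longrightarrow> w \<circ> tr l l' \<in> Wdk d k"
proof -
  assume l: "l < d" "l' < d" and w: "w \<in> Wdk d k"
  have s: "(\<Sum>m<d. \<bar>w (tr l l' m)\<bar>) = real k" using sum_tr[OF l, of "\<lambda>m. \<bar>w m\<bar>"] Wdk_sum[OF w] by simp
  have v: "\<forall>m<d. w (tr l l' m) \<in> {-1,0,1}" using Wdk_val[OF w] by blast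
  have o: "\<forall>m\<ge>d. w (tr l l' m) = 0" using Wdk_out[OF w] tr_ge[OF l] by simp
  show ?thesis unfolding Wdk_def o_def using v o s by simp
qed

lemma tr_comp: "(w \<circ> tr l l') \<circ> tr l l' = w"
  by (rule ext) (simp add: o_def)

lemma sum_Wdk_wswap: "l < d \<Longrightarrow> l' < d \<Longrightarrow> (\<Sum>w\<in>Wdk d k. h (w \<circ> tr l l')) = (\<Sum>w\<in>Wdk d k. h w)"
  by (rule sum.reindex_bij_witness[of _ "\<lambda>w. w \<circ> tr l l'" "\<lambda>w. w \<circ> tr l l'"]) (auto simp: wswap_Wdk tr_comp)

lemma sum_Wdk_abs:
  assumes "l < d"
  shows "real d * (\<Sum>w\<in>Wdk d k. \<bar>w l\<bar>) = real k * real (card (Wdk d k))"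
proof -
  have d0: "0 < d" using assms by simp
  have e: "(\<Sum>w\<in>Wdk d k. \<bar>w l'\<bar>) = (\<Sum>w\<in>Wdk d k. \<bar>w l\<bar>)" if "l' < d" for l'
  proof -
    have h: "\<And>w. (w \<circ> tr l l') l' = w l" by (simp add: tr_def)
    have "(\<Sum>w\<in>Wdk d k. \<bar>(w \<circ> tr l l') l'\<bar>) = (\<Sum>w\<in>Wdk d k. \<bar>w l'\<bar>)"
      by (rule sum_Wdk_wswap[OF assms that])
    then show ?thesis unfolding h by simp
  qed
  have "(\<Sum>l'<d. \<Sum>w\<in>Wdk d k. \<bar>w l'\<bar>) = (\<Sum>l'<d. \<Sum>w\<in>Wdk d k. \<bar>w l\<bar>)"
    by (rule sum.cong) (auto simp: e)
  then have "real d * (\<Sum>w\<in>Wdk d k. \<bar>w l\<bar>) = (\<Sum>l'<d. \<Sum>w\<in>Wdk d k. \<bar>w l'\<bar>)"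
    by simp
  also have "\<dots> = (\<Sum>w\<in>Wdk d k. \<Sum>l'<d. \<bar>w l'\<bar>)" by (rule sum.swap)
  also have "\<dots> = (\<Sum>w\<in>Wdk d k. real k)" by (intro sum.cong) (auto simp: Wdk_sum)
  finally show ?thesis by simp
qed

definition nu :: "nat \<Rightarrow> nat \<Rightarrow> real" where
  "nu d k = (\<Sum>w\<in>Wdk d k. w 0 * sgn (\<Sum>m<d. w m)) / real (card (Wdk d k))"

lemma sum_Wdk_corr:
  assumes z: "z \<in> cube d" and l: "l < d"
  shows "(\<Sum>w\<in>Wdk d k. w l * sgn (\<Sum>m<d. w m * z m)) = z l * (\<Sum>w\<in>Wdk d k. w 0 * sgn (\<Sum>m<d. w m))"
proof -
  have "(\<Sum>w\<in>Wdk d k. w l * sgn (\<Sum>m<d. w m * z m))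
      = (\<Sum>w\<in>Wdk d k. wflip z w l * sgn (\<Sum>m<d. wflip z w m * z m))"
    using sum_Wdk_wflip[OF z, of "\<lambda>w. w l * sgn (\<Sum>m<d. w m * z m)"] by simp
  also have "\<dots> = (\<Sum>w\<in>Wdk d k. z l * (w l * sgn (\<Sum>m<d. w m)))"
  proof (rule sum.cong[OF refl])
    fix w
    have "(\<Sum>m<d. wflip z w m * z m) = (\<Sum>m<d. w m)"
      by (rule sum.cong) (auto simp: wflip_def mult.assoc cube_sq[OF z])
    then show "wflip z w l * sgn (\<Sum>m<d. wflip z w m * z m) = z l * (w l * sgn (\<Sum>m<d. w m))"
      by (simp add: wflip_def)
  qed
  also have "\<dots> = z l * (\<Sum>w\<in>Wdk d k. w l * sgn (\<Sum>m<d. w m))" by (simp add: sum_distrib_left)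
  also have "(\<Sum>w\<in>Wdk d k. w l * sgn (\<Sum>m<d. w m)) = (\<Sum>w\<in>Wdk d k. w 0 * sgn (\<Sum>m<d. w m))"
  proof -
    have d0: "0 < d" using l by simp
    have sw: "(\<Sum>w\<in>Wdk d k. (w \<circ> tr 0 l) 0 * sgn (\<Sum>m<d. (w \<circ> tr 0 l) m)) = (\<Sum>w\<in>Wdk d k. w 0 * sgn (\<Sum>m<d. w m))"
      by (rule sum_Wdk_wswap[OF d0 l])
    have h: "\<And>w. (\<Sum>m<d. (w \<circ> tr 0 l) m) = (\<Sum>m<d. w m)"
      using sum_tr[OF d0 l] by (simp add: o_def)
    have h0: "\<And>w. (w \<circ> tr 0 l) 0 = w l" by (simp add: tr_def)
    show ?thesis using sw unfolding h h0 .
  qed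
  finally show ?thesis .
qed

lemma nu_d:
  assumes d0: "0 < d"
  shows "real d * (\<Sum>w\<in>Wdk d k. w 0 * sgn (\<Sum>m<d. w m)) = (\<Sum>w\<in>Wdk d k. \<bar>\<Sum>m<d. w m\<bar>)"
proof -
  have "real d * (\<Sum>w\<in>Wdk d k. w 0 * sgn (\<Sum>m<d. w m)) = (\<Sum>l<d. \<Sum>w\<in>Wdk d k. w l * sgn (\<Sum>m<d. w m))"
  proof -
    have inner: "(\<Sum>w\<in>Wdk d k. w l * sgn (\<Sum>m<d. w m)) = (\<Sum>w\<in>Wdk d k. w 0 * sgn (\<Sum>m<d. w m))" if "l < d" for l
    proof -
      define z where "z = (\<lambda>m. if m < d then (1::real) else 0)"
      have z: "z \<in> cube d" by (simp add: z_def cube_def)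
      have "\<And>w. (\<Sum>m<d. w m * z m) = (\<Sum>m<d. w m)" by (rule sum.cong) (auto simp: z_def)
      then show ?thesis using sum_Wdk_corr[OF z that] that by (simp add: z_def)
    qed
    then have "(\<Sum>l<d. \<Sum>w\<in>Wdk d k. w l * sgn (\<Sum>m<d. w m)) = (\<Sum>l<d. \<Sum>w\<in>Wdk d k. w 0 * sgn (\<Sum>m<d. w m))"
      by (rule sum.cong[OF refl]) (simp add: inner)
    then show ?thesis by simp
  qed
  also have "\<dots> = (\<Sum>w\<in>Wdk d k. (\<Sum>l<d. w l) * sgn (\<Sum>m<d. w m))"
    by (subst sum.swap) (simp add: sum_distrib_right)
  also have "\<dots> = (\<Sum>w\<in>Wdk d k. \<bar>\<Sum>m<d. w m\<bar>)" by (intro sum.cong refl) (simp add: abs_sgn)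
  finally show ?thesis .
qed

lemma sum_abs_lower:
  assumes kd: "k \<le> d"
  shows "(\<Sum>w\<in>Wdk d k. \<bar>\<Sum>m<d. w m\<bar>) \<ge> real (card (Wdk d k)) * sqrt k / 5"
proof -
  let ?W = "Wdk d k" and ?N = "(2::real) ^ d"
  have e: "(\<Sum>w\<in>?W. \<bar>\<Sum>m<d. w m\<bar>) = (\<Sum>w\<in>?W. \<bar>Sd d w z\<bar>)" if z: "z \<in> cube d" for z
  proof -
    have "(\<Sum>w\<in>?W. \<bar>\<Sum>m<d. w m\<bar>) = (\<Sum>w\<in>?W. \<bar>\<Sum>m<d. wflip z w m * z m\<bar>)"
    proof (rule sum.cong[OF refl])
      fix w
      show "\<bar>\<Sum>m<d. w m\<bar> = \<bar>\<Sum>m<d. wflip z w m * z m\<bar>"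
        by (rule arg_cong[where f=abs], rule sum.cong) (auto simp: wflip_def mult.assoc cube_sq[OF z])
    qed
    also have "\<dots> = (\<Sum>w\<in>?W. \<bar>Sd d w z\<bar>)"
      using sum_Wdk_wflip[OF z, of "\<lambda>w. \<bar>\<Sum>m<d. w m * z m\<bar>"] by (simp add: Sd_def)
    finally show ?thesis .
  qed
  have "(\<Sum>z\<in>cube d. \<Sum>w\<in>?W. \<bar>Sd d w z\<bar>) = (\<Sum>z\<in>cube d. \<Sum>w\<in>?W. \<bar>\<Sum>m<d. w m\<bar>)"
    by (rule sum.cong[OF refl]) (simp add: e)
  then have "?N * (\<Sum>w\<in>?W. \<bar>\<Sum>m<d. w m\<bar>) = (\<Sum>z\<in>cube d. \<Sum>w\<in>?W. \<bar>Sd d w z\<bar>)"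
    by (simp add: card_cube)
  also have "\<dots> = (\<Sum>w\<in>?W. \<Sum>z\<in>cube d. \<bar>Sd d w z\<bar>)" by (rule sum.swap)
  also have "\<dots> \<ge> (\<Sum>w\<in>?W. ?N * sqrt k / 5)"
  proof (rule sum_mono)
    fix w assume w: "w \<in> ?W"
    have "(\<Sum>l<d. (w l)^2) = real k"
      using Wdk_sum[OF w] by (simp add: power2_eq_square Wdk_sq[OF w])
    then show "?N * sqrt k / 5 \<le> (\<Sum>z\<in>cube d. \<bar>Sd d w z\<bar>)" using khintchine[of d w] by simp
  qed
  finally have "?N * (\<Sum>w\<in>?W. \<bar>\<Sum>m<d. w m\<bar>) \<ge> ?N * (real (card ?W) * sqrt k / 5)" by simp
  then show ?thesis by simp
qed

lemma exp_quad: "\<bar>u::real\<bar> \<le> 1 \<Longrightarrow> exp u \<le> 1 + u + u^2"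
proof (cases "u \<ge> 0")
  case True
  assume "\<bar>u\<bar> \<le> 1"
  then show ?thesis using exp_bound[of u] True by simp
next
  case False
  assume a: "\<bar>u\<bar> \<le> 1"
  define v where "v = - u"
  have v: "0 \<le> v" "v \<le> 1" using False a by (auto simp: v_def)
  have "exp (-v) = 1 / exp v" by (simp add: exp_minus field_simps)
  also have "\<dots> \<le> 1 / (1 + v)" using v by (intro divide_left_mono) (auto simp: add_pos_nonneg)
  also have "\<dots> \<le> 1 - v + v^2"
  proof -
    have "1 \<le> (1 - v + v^2) * (1 + v)" using v by (simp add: algebra_simps power2_eq_square power3_eq_cube)
    then show ?thesis using v by (simp add: divide_le_eq)
  qed
  finally show ?thesis by (simp add: v_def)
qed

lemma sum_prod_PiE_sub:
  fixes h :: "'b \<Rightarrow> real"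
  assumes fin: "finite I" "finite B" and J: "J \<subseteq> I"
  shows "(\<Sum>W\<in>PiE I (\<lambda>_. B). \<Prod>i\<in>J. h (W i)) = (\<Sum>w\<in>B. h w) ^ card J * real (card B) ^ (card I - card J)"
proof -
  define f where "f i w = (if i \<in> J then h w else 1)" for i w
  have "(\<Prod>i\<in>I. \<Sum>w\<in>B. f i w) = (\<Sum>W\<in>PiE I (\<lambda>_. B). \<Prod>i\<in>I. f i (W i))"
    by (rule prod_sum_PiE) (use fin in auto)
  also have "\<dots> = (\<Sum>W\<in>PiE I (\<lambda>_. B). \<Prod>i\<in>J. h (W i))"
  proof (rule sum.cong[OF refl])
    fix W
    have "(\<Prod>i\<in>I. f i (W i)) = (\<Prod>i\<in>J. f i (W i))"
      by (rule prod.mono_neutral_right) (use fin J in \<open>auto simp: f_def\<close>)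
    also have "\<dots> = (\<Prod>i\<in>J. h (W i))" by (rule prod.cong) (auto simp: f_def)
    finally show "(\<Prod>i\<in>I. f i (W i)) = (\<Prod>i\<in>J. h (W i))" .
  qed
  finally have 1: "(\<Sum>W\<in>PiE I (\<lambda>_. B). \<Prod>i\<in>J. h (W i)) = (\<Prod>i\<in>I. \<Sum>w\<in>B. f i w)" ..
  have "(\<Prod>i\<in>I. \<Sum>w\<in>B. f i w) = (\<Prod>i\<in>I. if i \<in> J then (\<Sum>w\<in>B. h w) else real (card B))"
    by (rule prod.cong) (auto simp: f_def)
  also have "\<dots> = (\<Prod>i\<in>J. (\<Sum>w\<in>B. h w)) * (\<Prod>i\<in>I - J. real (card B))"
  proof -
    have e1: "I \<inter> J = J" "I \<inter> - J = I - J" using J by auto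
    show ?thesis by (simp add: prod.If_cases[OF fin(1)] e1)
  qed
  also have "\<dots> = (\<Sum>w\<in>B. h w) ^ card J * real (card B) ^ (card I - card J)"
    using J fin by (simp add: card_Diff_subset finite_subset)
  finally show ?thesis using 1 by simp
qed

lemma card_PiE_const: "finite I \<Longrightarrow> card (PiE I (\<lambda>_. B)) = card B ^ card I"
  by (simp add: card_PiE)

lemma tail_bound:
  fixes g :: "'b \<Rightarrow> real" and B :: "'b set" and I J :: "'i set"
  assumes fin: "finite I" "finite B" "B \<noteq> {}" and J: "J \<subseteq> I"
    and gb: "\<And>w. w \<in> B \<Longrightarrow> \<bar>g w\<bar> \<le> 1"
    and s2: "\<sigma>2 > 0" "(\<Sum>w\<in>B. (g w)^2) \<le> \<sigma>2 * real (card B)"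
    and t: "0 < t" "t \<le> 2 * \<sigma>2"
  shows "real (card {W \<in> PiE I (\<lambda>_. B). real (card J) * ((\<Sum>w\<in>B. g w) / real (card B) + t) \<le> (\<Sum>i\<in>J. g (W i))})
     \<le> exp (- real (card J) * t^2 / (4 * \<sigma>2)) * real (card (PiE I (\<lambda>_. B)))"
proof -
  let ?\<Omega> = "PiE I (\<lambda>_. B)" and ?N = "real (card B)" and ?q = "real (card J)"
  define m where "m = (\<Sum>w\<in>B. g w) / ?N"
  define lam where "lam = t / (2 * \<sigma>2)"
  define \<theta> where "\<theta> = ?q * (m + t)"
  have N: "?N > 0" using fin by (simp add: card_gt_0_iff)
  have l: "0 < lam" "lam \<le> 1" using t s2 by (auto simp: lam_def field_simps)
  have finO: "finite ?\<Omega>" using fin by (simp add: finite_PiE)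
  have "real (card {W \<in> ?\<Omega>. \<theta> \<le> (\<Sum>i\<in>J. g (W i))}) = (\<Sum>W\<in>{W \<in> ?\<Omega>. \<theta> \<le> (\<Sum>i\<in>J. g (W i))}. 1)"
    by simp
  also have "\<dots> \<le> (\<Sum>W\<in>{W \<in> ?\<Omega>. \<theta> \<le> (\<Sum>i\<in>J. g (W i))}. exp (lam * ((\<Sum>i\<in>J. g (W i)) - \<theta>)))"
  proof (rule sum_mono)
    fix W assume "W \<in> {W \<in> ?\<Omega>. \<theta> \<le> (\<Sum>i\<in>J. g (W i))}"
    then have "0 \<le> lam * ((\<Sum>i\<in>J. g (W i)) - \<theta>)" using l by simp
    then show "1 \<le> exp (lam * ((\<Sum>i\<in>J. g (W i)) - \<theta>))" by simp
  qed
  also have "\<dots> \<le> (\<Sum>W\<in>?\<Omega>. exp (lam * ((\<Sum>i\<in>J. g (W i)) - \<theta>)))"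
    by (rule sum_mono2) (use finO in auto)
  also have "\<dots> = exp (- lam * \<theta>) * (\<Sum>W\<in>?\<Omega>. \<Prod>i\<in>J. exp (lam * g (W i)))"
  proof -
    have e: "\<And>W. exp (lam * ((\<Sum>i\<in>J. g (W i)) - \<theta>)) = exp (- lam * \<theta>) * exp (\<Sum>i\<in>J. lam * g (W i))"
      by (simp add: exp_add[symmetric] sum_distrib_left algebra_simps)
    have "\<And>W. exp (lam * ((\<Sum>i\<in>J. g (W i)) - \<theta>)) = exp (- lam * \<theta>) * (\<Prod>i\<in>J. exp (lam * g (W i)))"
      unfolding e using finite_subset[OF J fin(1)] by (simp add: exp_sum)
    then show ?thesis by (simp add: sum_distrib_left)
  qed
  also have "\<dots> = exp (- lam * \<theta>) * ((\<Sum>w\<in>B. exp (lam * g w)) ^ card J * ?N ^ (card I - card J))"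
    by (subst sum_prod_PiE_sub[OF fin(1,2) J]) simp
  also have "\<dots> \<le> exp (- lam * \<theta>) * ((?N * exp (lam * m + lam^2 * \<sigma>2)) ^ card J * ?N ^ (card I - card J))"
  proof -
    have "(\<Sum>w\<in>B. exp (lam * g w)) \<le> (\<Sum>w\<in>B. 1 + lam * g w + lam^2 * (g w)^2)"
    proof (rule sum_mono)
      fix w assume w: "w \<in> B"
      have "\<bar>lam * g w\<bar> \<le> 1" using gb[OF w] l by (simp add: abs_mult mult_le_one)
      then show "exp (lam * g w) \<le> 1 + lam * g w + lam^2 * (g w)^2"
        using exp_quad[of "lam * g w"] by (simp add: power_mult_distrib)
    qed
    also have "\<dots> = ?N + lam * (\<Sum>w\<in>B. g w) + lam^2 * (\<Sum>w\<in>B. (g w)^2)"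
      by (simp add: sum.distrib sum_distrib_left)
    also have "\<dots> \<le> ?N + lam * (?N * m) + lam^2 * (\<sigma>2 * ?N)"
      using s2(2) N l by (simp add: m_def mult_left_mono)
    also have "\<dots> = ?N * (1 + (lam * m + lam^2 * \<sigma>2))" by (simp add: algebra_simps)
    also have "\<dots> \<le> ?N * exp (lam * m + lam^2 * \<sigma>2)"
      using N by (intro mult_left_mono) (auto simp: exp_ge_add_one_self)
    finally have A: "(\<Sum>w\<in>B. exp (lam * g w)) \<le> ?N * exp (lam * m + lam^2 * \<sigma>2)" .
    have "(\<Sum>w\<in>B. exp (lam * g w)) ^ card J \<le> (?N * exp (lam * m + lam^2 * \<sigma>2)) ^ card J"
      by (rule power_mono[OF A]) (simp add: sum_nonneg)
    then show ?thesis by (intro mult_left_mono mult_right_mono) auto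
  qed
  also have "\<dots> = exp (- lam * \<theta>) * exp (?q * (lam * m + lam^2 * \<sigma>2)) * (?N ^ card J * ?N ^ (card I - card J))"
  proof -
    have "(?N * exp (lam * m + lam^2 * \<sigma>2)) ^ card J = ?N ^ card J * exp (?q * (lam * m + lam^2 * \<sigma>2))"
      by (simp only: power_mult_distrib exp_of_nat_mult)
    then show ?thesis by (simp only: mult_ac)
  qed
  also have "\<dots> = exp (- lam * \<theta> + ?q * (lam * m + lam^2 * \<sigma>2)) * (?N ^ card J * ?N ^ (card I - card J))"
    by (simp only: exp_add)
  also have "?N ^ card J * ?N ^ (card I - card J) = real (card ?\<Omega>)"
  proof -
    have "card J \<le> card I" using J fin by (simp add: card_mono)
    then have "?N ^ card J * ?N ^ (card I - card J) = ?N ^ card I" by (simp add: power_add[symmetric])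
    then show ?thesis using fin by (simp add: card_PiE_const)
  qed
  also have "- lam * \<theta> + ?q * (lam * m + lam^2 * \<sigma>2) = - ?q * t^2 / (4 * \<sigma>2)"
    using s2 by (simp add: \<theta>_def lam_def field_simps power2_eq_square)
  finally show ?thesis by (simp add: \<theta>_def m_def)
qed

lemma odd_sum_bounds:
  assumes w: "w \<in> Wdk d k" and z: "z \<in> cube d" and k: "odd k"
  shows "1 \<le> \<bar>\<Sum>l<d. w l * z l\<bar>" "\<bar>\<Sum>l<d. w l * z l\<bar> \<le> real k"
proof -
  let ?S = "\<Sum>l<d. w l * z l"
  have "\<bar>?S\<bar> \<le> (\<Sum>l<d. \<bar>w l * z l\<bar>)" by (rule sum_abs)
  also have "\<dots> = (\<Sum>l<d. \<bar>w l\<bar>)"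
  proof (rule sum.cong[OF refl])
    fix l assume "l \<in> {..<d}"
    then have "z l = 1 \<or> z l = -1" using cube_val[OF z] by auto
    then show "\<bar>w l * z l\<bar> = \<bar>w l\<bar>" by (auto simp: abs_mult)
  qed
  also have "\<dots> = real k" by (rule Wdk_sum[OF w])
  finally show "\<bar>?S\<bar> \<le> real k" .
  have t: "(w l * z l + \<bar>w l\<bar>) / 2 \<in> \<int>" if "l < d" for l
    using Wdk_val[OF w, of l] cube_val[OF z that] by auto
  have "(\<Sum>l<d. (w l * z l + \<bar>w l\<bar>) / 2) \<in> \<int>" by (rule Ints_sum) (use t in auto)
  moreover have "(\<Sum>l<d. (w l * z l + \<bar>w l\<bar>) / 2) = (?S + real k) / 2"
    using Wdk_sum[OF w] by (simp add: sum.distrib sum_divide_distrib[symmetric])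
  ultimately obtain M :: int where M: "(?S + real k) / 2 = of_int M" by (metis Ints_cases)
  then have S: "?S = of_int (2 * M - int k)" by simp
  have "2 * M - int k \<noteq> 0" using k by presburger
  then have "1 \<le> \<bar>2 * M - int k\<bar>" by linarith
  then show "1 \<le> \<bar>?S\<bar>" unfolding S by (metis of_int_1_le_iff of_int_abs)
qed

lemma sgn_odd_sum:
  assumes "w \<in> Wdk d k" "z \<in> cube d" "odd k"
  shows "sgn (\<Sum>l<d. w l * z l) \<in> {-1, 1}"
  using odd_sum_bounds[OF assms] by (auto simp: sgn_real_def)

lemma ptf_const:
  assumes "s \<in> {-1, 1}" "\<forall>x\<in>X. f x = s" "1 \<le> M" "1 \<le> B"
  shows "is_PTF X V h f K M B"
  unfolding is_PTF_def
proof (intro exI[of _ "pconst s"] conjI ballI)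
  show "rpoly_vars (pconst s) \<subseteq> V" by simp
  show "rpoly_deg_le (pconst s) K" by simp
  show "coeff_norm (pconst s) \<le> M"
    by (rule order_trans[OF coeff_norm_le_n1]) (use assms(1,3) in auto)
  fix x assume "x \<in> X"
  then have "rpoly_eval (pconst s) (h x) * f x = 1" using assms(1,2) by auto
  then show "1 \<le> rpoly_eval (pconst s) (h x) * f x" "rpoly_eval (pconst s) (h x) * f x \<le> B"
    using assms(4) by auto
qed

lemma ptf_var:
  assumes "m \<in> V" "\<forall>x\<in>X. f x \<in> {-1, 1} \<and> h x m = f x" "1 \<le> M" "1 \<le> B" "1 \<le> K"
  shows "is_PTF X V h f K M B"
  unfolding is_PTF_def
proof (intro exI[of _ "pvar m"] conjI ballI)
  show "rpoly_vars (pvar m) \<subseteq> V" using assms(1) by simp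
  show "rpoly_deg_le (pvar m) K" using assms(5) by (rule deg_le_pvar)
  show "coeff_norm (pvar m) \<le> M"
    by (rule order_trans[OF coeff_norm_le_n1]) (use assms(3) in auto)
  fix x assume "x \<in> X"
  then have "rpoly_eval (pvar m) (h x) * f x = 1" using assms(2) by auto
  then show "1 \<le> rpoly_eval (pvar m) (h x) * f x" "rpoly_eval (pvar m) (h x) * f x \<le> B"
    using assms(4) by auto
qed

lemma max_box_le:
  fixes d :: nat and y z :: "nat \<Rightarrow> real"
  assumes "d \<ge> 1" "\<And>l. l < d \<Longrightarrow> \<bar>y l - z l\<bar> \<le> e"
  shows "Max ((\<lambda>l. \<bar>y l - z l\<bar>) ` {..<d}) \<le> e"
proof -
  have fin: "finite ((\<lambda>l. \<bar>y l - z l\<bar>) ` {..<d})" by simp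
  have "0 \<in> {..<d}" using assms(1) by simp
  then have ne: "(\<lambda>l. \<bar>y l - z l\<bar>) ` {..<d} \<noteq> {}" by blast
  show ?thesis unfolding Max_le_iff[OF fin ne] using assms(2) by auto
qed

lemma lip_const:
  assumes ext: "is_multilinear_ext d g P" and lip: "lipschitz_box d L P" and L: "L < 1"
    and pm: "\<forall>x\<in>cube d. g x \<in> {-1,1}" and d: "d \<ge> 1"
    and x: "x \<in> cube d" and y: "y \<in> cube d"
  shows "g x = g y"
proof -
  have ev: "rpoly_eval P x = g x" "rpoly_eval P y = g y" using ext x y by (auto simp: is_multilinear_ext_def)
  have box: "\<forall>l<d. \<bar>x l\<bar> \<le> 1 \<and> \<bar>y l\<bar> \<le> 1" using cube_val[OF x] cube_val[OF y] by fastforce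
  have m: "Max ((\<lambda>l. \<bar>x l - y l\<bar>) ` {..<d}) \<le> 2"
    by (rule max_box_le[OF d]) (use cube_val[OF x] cube_val[OF y] in fastforce)
  have m0: "0 \<le> Max ((\<lambda>l. \<bar>x l - y l\<bar>) ` {..<d})"
  proof -
    have "\<bar>x 0 - y 0\<bar> \<le> Max ((\<lambda>l. \<bar>x l - y l\<bar>) ` {..<d})"
      by (rule Max_ge) (use d in auto)
    then show ?thesis by linarith
  qed
  have "\<bar>g x - g y\<bar> \<le> L * Max ((\<lambda>l. \<bar>x l - y l\<bar>) ` {..<d})"
  proof -
    have "\<bar>rpoly_eval P x - rpoly_eval P y\<bar> \<le> L * Max ((\<lambda>l. \<bar>x l - y l\<bar>) ` {..<d})"
      using lip box unfolding lipschitz_box_def by blast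
    then show ?thesis using ev by simp
  qed
  also have "\<dots> < 2"
  proof (cases "L \<le> 0")
    case True then have "L * Max ((\<lambda>l. \<bar>x l - y l\<bar>) ` {..<d}) \<le> 0" using m0 by (simp add: mult_nonpos_nonneg)
    then show ?thesis by linarith
  next
    case False
    then have "L * Max ((\<lambda>l. \<bar>x l - y l\<bar>) ` {..<d}) \<le> L * 2" using m by (intro mult_left_mono) auto
    then show ?thesis using L by linarith
  qed
  finally have "\<bar>g x - g y\<bar> < 2" .
  moreover have "g x \<in> {-1,1}" "g y \<in> {-1,1}" using pm x y by auto
  ultimately show ?thesis by auto
qed

lemma sqrt_le_self: "1 \<le> (y::real) \<Longrightarrow> sqrt y \<le> y"
proof -
  assume y1: "1 \<le> y"
  have s1: "1 \<le> sqrt y" using y1 by simp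
  have "sqrt y * 1 \<le> sqrt y * sqrt y" by (rule mult_left_mono[OF s1]) (use y1 in simp)
  also have "\<dots> = y" using y1 by simp
  finally show ?thesis by simp
qed

lemma gen_bound:
  fixes k A A' Sd Sk T :: real
  assumes "0 \<le> k" "0 \<le> A" "A \<le> A'" "0 \<le> Sd" "0 \<le> Sk" "Sk \<le> Sd" "0 \<le> T"
  shows "2 * k * (A * Sd) * (T * Sk) \<le> 2 * A' * T * k * (Sd * Sd)"
proof -
  have m: "A * Sk \<le> A' * Sd" using assms by (intro mult_mono) auto
  have n: "0 \<le> 2 * k * Sd * T" using assms by simp
  have "2 * k * (A * Sd) * (T * Sk) = (2 * k * Sd * T) * (A * Sk)" by (simp add: mult_ac)
  also have "\<dots> \<le> (2 * k * Sd * T) * (A' * Sd)" by (rule mult_left_mono[OF m n])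
  also have "\<dots> = 2 * A' * T * k * (Sd * Sd)" by (simp add: mult_ac)
  finally show ?thesis .
qed

lemma M_bound:
  fixes d k K :: nat
  assumes d: "d \<ge> 1" and kd: "k \<le> d"
  shows "2 * real k * sqrt (real ((K+1) * d ^ K)) * (10 * sqrt (real k)) ^ K
           \<le> (2 * (real K + 1) * 10 ^ K) * real k * real d ^ K"
proof -
  define A where "A = sqrt (real K + 1)"
  define Sd where "Sd = sqrt (real d) ^ K"
  define Sk where "Sk = sqrt (real k) ^ K"
  define T where "T = (10::real) ^ K"
  have a0: "real ((K+1) * d ^ K) = (real K + 1) * real d ^ K" by (simp add: algebra_simps)
  have a: "sqrt (real ((K+1) * d ^ K)) = A * Sd"
    unfolding a0 real_sqrt_mult real_sqrt_power A_def Sd_def ..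
  have t: "(10 * sqrt (real k)) ^ K = T * Sk" unfolding T_def Sk_def by (rule power_mult_distrib)
  have b: "A \<le> real K + 1" unfolding A_def by (rule sqrt_le_self) simp
  have c: "Sk \<le> Sd" unfolding Sk_def Sd_def using kd by (intro power_mono) auto
  have e: "Sd * Sd = real d ^ K" unfolding Sd_def by (simp add: power_mult_distrib[symmetric])
  have "2 * real k * sqrt (real ((K+1) * d ^ K)) * (10 * sqrt (real k)) ^ K = 2 * real k * (A * Sd) * (T * Sk)"
    unfolding a t ..
  also have "\<dots> \<le> 2 * (real K + 1) * T * real k * (Sd * Sd)"
    by (rule gen_bound) (use b c in \<open>auto simp: A_def Sd_def Sk_def T_def\<close>)
  also have "\<dots> = (2 * (real K + 1) * 10 ^ K) * real k * real d ^ K" unfolding e T_def ..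
  finally show ?thesis .
qed

lemma M_bound1:
  fixes d k K :: nat
  assumes d: "d \<ge> 1"
  shows "real k * sqrt (real ((K+1) * d ^ K)) \<le> (2 * (real K + 1) * 10 ^ K) * real k * real d ^ K"
proof -
  define Y where "Y = real ((K+1) * d ^ K)"
  define T where "T = (10::real) ^ K"
  have y0: "Y = (real K + 1) * real d ^ K" unfolding Y_def by (simp add: algebra_simps)
  have "1 \<le> real d ^ K" using d by (simp add: one_le_power)
  then have "1 * 1 \<le> (real K + 1) * real d ^ K" by (intro mult_mono) auto
  then have y1: "1 \<le> Y" unfolding y0 by simp
  have t1: "1 \<le> T" unfolding T_def by (simp add: one_le_power)
  have "sqrt Y \<le> Y" by (rule sqrt_le_self[OF y1])
  also have "Y \<le> 2 * T * Y" using t1 y1 by simp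
  finally have "real k * sqrt Y \<le> real k * (2 * T * Y)" by (simp add: mult_left_mono)
  also have "\<dots> = (2 * (real K + 1) * T) * real k * real d ^ K" unfolding y0 by (simp add: mult_ac)
  finally show ?thesis unfolding Y_def T_def .
qed

lemma ptf_level1:
  fixes d k K :: nat and X :: "(nat \<Rightarrow> real) set" and w :: "nat \<Rightarrow> real"
    and P :: "nat \<Rightarrow> nat rpoly" and p :: "nat \<Rightarrow> (nat \<Rightarrow> real) \<Rightarrow> real"
    and Gf :: "(nat \<Rightarrow> real) \<Rightarrow> nat \<Rightarrow> real" and f :: "(nat \<Rightarrow> real) \<Rightarrow> real"
  assumes d: "d \<ge> 1" and k: "odd k" and X: "X \<subseteq> cube d" and w: "w \<in> Wdk d k"
    and PP: "\<forall>l<d. is_multilinear_ext d (p l) (P l) \<and> rpoly_deg_le (P l) K \<and> (\<forall>x\<in>cube d. p l x \<in> {-1,1})"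
    and Gf: "\<forall>x\<in>X. Gf x \<in> cube d \<and> (\<forall>l<d. Gf x l = p l x)"
    and f: "\<forall>x\<in>X. f x = sgn (\<Sum>l<d. w l * Gf x l)"
    and M: "real k * sqrt (real ((K+1) * d ^ K)) \<le> M" and B: "real k \<le> B"
  shows "is_PTF X {..<d} (\<lambda>x. x) f K M B"
  unfolding is_PTF_def
proof (intro exI[of _ "\<Sum>l<d. pconst (w l) * P l"] conjI ballI)
  let ?Q = "\<Sum>l<d. pconst (w l) * P l"
  show "rpoly_vars ?Q \<subseteq> {..<d}"
  proof (rule vars_sum)
    fix l assume "l \<in> {..<d}"
    then have "rpoly_vars (P l) \<subseteq> {..<d}" using PP by (auto simp: is_multilinear_ext_def)
    then show "rpoly_vars (pconst (w l) * P l) \<subseteq> {..<d}" by (rule order_trans[OF vars_pconst_mult])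
  qed
  show "rpoly_deg_le ?Q K"
  proof (rule deg_le_sum)
    fix l assume "l \<in> {..<d}"
    then have "rpoly_deg_le (P l) K" using PP by auto
    then show "rpoly_deg_le (pconst (w l) * P l) K" using deg_le_mult[OF deg_le_pconst[of _ 0]] by fastforce
  qed
  have "coeff_norm ?Q \<le> n1 ?Q" by (rule coeff_norm_le_n1)
  also have "\<dots> \<le> (\<Sum>l<d. n1 (pconst (w l) * P l))" by (rule n1_sum)
  also have "\<dots> \<le> (\<Sum>l<d. \<bar>w l\<bar> * sqrt (real ((K+1) * d ^ K)))"
  proof (rule sum_mono)
    fix l assume "l \<in> {..<d}"
    then have "n1 (P l) \<le> sqrt (real ((K+1) * d ^ K))"
      using PP n1_ml_bound[OF _ _ _ d] by auto
    then show "n1 (pconst (w l) * P l) \<le> \<bar>w l\<bar> * sqrt (real ((K+1) * d ^ K))"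
    proof -
      have "n1 (pconst (w l) * P l) \<le> \<bar>w l\<bar> * n1 (P l)" using n1_mult[of "pconst (w l)" "P l"] by simp
      also have "\<dots> \<le> \<bar>w l\<bar> * sqrt (real ((K+1) * d ^ K))"
        using \<open>n1 (P l) \<le> _\<close> by (simp add: mult_left_mono)
      finally show ?thesis .
    qed
  qed
  also have "\<dots> = real k * sqrt (real ((K+1) * d ^ K))"
    using Wdk_sum[OF w] by (simp only: sum_distrib_right[symmetric])
  finally show "coeff_norm ?Q \<le> M" using M by linarith
  fix x assume x: "x \<in> X"
  let ?S = "\<Sum>l<d. w l * Gf x l"
  have "rpoly_eval ?Q x = (\<Sum>l<d. w l * rpoly_eval (P l) x)" by (simp add: eval_sum eval_mult)
  also have "\<dots> = ?S"
  proof (rule sum.cong[OF refl])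
    fix l assume "l \<in> {..<d}"
    then show "w l * rpoly_eval (P l) x = w l * Gf x l"
      using PP Gf x X by (auto simp: is_multilinear_ext_def)
  qed
  finally have ev: "rpoly_eval ?Q x * f x = \<bar>?S\<bar>" using f x by (simp add: abs_sgn)
  have "1 \<le> \<bar>?S\<bar>" "\<bar>?S\<bar> \<le> real k" using odd_sum_bounds[OF w _ k, of "Gf x"] Gf x by auto
  then show "1 \<le> rpoly_eval ?Q x * f x" "rpoly_eval ?Q x * f x \<le> B" using ev B by auto
qed

lemma approx_aux:
  fixes D e zv T :: real
  assumes D: "D > 0" and e: "e > 0" and z: "\<bar>zv\<bar> = 1" and T: "\<bar>T - D * zv\<bar> \<le> D * e"
  shows "\<bar>T / ((1 + e) * D)\<bar> \<le> 1" "\<bar>T / ((1 + e) * D) - zv\<bar> \<le> 2 * e"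
proof -
  define p where "p = (1 + e) * D"
  have p: "p > 0" using D e by (simp add: p_def)
  have Dz: "\<bar>D * zv\<bar> = D" using D z by (simp add: abs_mult)
  have "\<bar>T\<bar> \<le> \<bar>T - D * zv\<bar> + \<bar>D * zv\<bar>" using abs_triangle_ineq[of "T - D*zv" "D*zv"] by simp
  then have "\<bar>T\<bar> \<le> p" using T Dz by (simp add: p_def algebra_simps)
  then have "\<bar>T\<bar> / p \<le> 1" using p by (simp add: pos_divide_le_eq)
  then show "\<bar>T / ((1 + e) * D)\<bar> \<le> 1" using p by (simp add: abs_divide p_def[symmetric])
  have eq1: "T / p - zv = (T - p * zv) / p" using p by (simp add: diff_divide_distrib)
  have eq2: "T - p * zv = (T - D * zv) - e * (D * zv)" by (simp add: p_def algebra_simps)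
  have eDz: "\<bar>e * (D * zv)\<bar> = e * D" using e Dz by (simp add: abs_mult)
  have "\<bar>(T - D * zv) - e * (D * zv)\<bar> \<le> \<bar>T - D * zv\<bar> + \<bar>e * (D * zv)\<bar>" by (rule abs_triangle_ineq4)
  then have b1: "\<bar>T - p * zv\<bar> \<le> 2 * e * D" unfolding eq2 using T eDz by (simp add: algebra_simps)
  have b2: "2 * e * D \<le> 2 * e * p" using e D by (simp add: p_def algebra_simps)
  have "\<bar>T / p - zv\<bar> = \<bar>T - p * zv\<bar> / p" unfolding eq1 using p by (simp add: abs_divide)
  also have "\<dots> \<le> 2 * e * p / p" using b1 b2 p by (intro divide_right_mono) auto
  also have "\<dots> = 2 * e" using p by simp
  finally show "\<bar>T / ((1 + e) * D) - zv\<bar> \<le> 2 * e" unfolding p_def .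
qed

lemma final_aux:
  fixes E S k :: real
  assumes "\<bar>E - 2 * S\<bar> \<le> 1" "1 \<le> \<bar>S\<bar>" "\<bar>S\<bar> \<le> k"
  shows "1 \<le> E * sgn S" "E * sgn S \<le> 2 * k + 1"
proof -
  have e1: "E - 2 * S \<le> 1" "2 * S - E \<le> 1" using assms(1) by (auto simp: abs_le_iff)
  consider "S > 0" | "S < 0" using assms(2) by linarith
  then have "1 \<le> E * sgn S \<and> E * sgn S \<le> 2 * k + 1"
  proof cases
    case 1
    then have "sgn S = 1" "\<bar>S\<bar> = S" by auto
    then show ?thesis using e1 assms(2,3) by simp
  next
    case 2
    then have "sgn S = -1" "\<bar>S\<bar> = - S" by auto
    then show ?thesis using e1 assms(2,3) by simp
  qed
  then show "1 \<le> E * sgn S" "E * sgn S \<le> 2 * k + 1" by auto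
qed

lemma ptf_leveli:
  fixes d k K q a :: nat and L nu M B :: real and X :: "(nat \<Rightarrow> real) set" and w :: "nat \<Rightarrow> real"
    and Wa :: "nat \<Rightarrow> nat \<Rightarrow> real" and P :: "nat \<Rightarrow> nat rpoly" and p :: "nat \<Rightarrow> (nat \<Rightarrow> real) \<Rightarrow> real"
    and Ga Gi :: "(nat \<Rightarrow> real) \<Rightarrow> nat \<Rightarrow> real" and fi :: "(nat \<Rightarrow> real) \<Rightarrow> real"
    and V :: "(nat \<times> nat) set" and h :: "(nat \<Rightarrow> real) \<Rightarrow> nat \<times> nat \<Rightarrow> real"
  assumes d: "d \<ge> 1" and k1: "1 \<le> k" and k: "odd k" and L: "L \<ge> 1" and K: "K \<ge> 1" and q: "q \<ge> 1"
    and X: "X \<subseteq> cube d"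
    and w: "w \<in> Wdk d k" and Wa: "\<forall>j\<in>{1..q}. Wa j \<in> Wdk d k"
    and PP: "\<forall>l<d. is_multilinear_ext d (p l) (P l) \<and> rpoly_deg_le (P l) K \<and> lipschitz_box d L (P l) \<and> (\<forall>x\<in>cube d. p l x \<in> {-1,1})"
    and Ga: "\<forall>x\<in>X. Ga x \<in> cube d"
    and Gi: "\<forall>x\<in>X. Gi x \<in> cube d \<and> (\<forall>l<d. Gi x l = p l (Ga x))"
    and V: "\<forall>j\<in>{1..q}. (a, j) \<in> V"
    and h: "\<forall>x\<in>X. \<forall>j\<in>{1..q}. h x (a, j) = sgn (\<Sum>l<d. Wa j l * Ga x l)"
    and fi: "\<forall>x\<in>X. fi x = sgn (\<Sum>l<d. w l * Gi x l)"
    and nu: "nu > 0" "sqrt k / 5 \<le> real d * nu"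
    and conc: "\<forall>x\<in>X. \<forall>v<d. \<bar>(\<Sum>j\<in>{1..q}. Wa j v * sgn (\<Sum>l<d. Wa j l * Ga x l)) - real q * nu * Ga x v\<bar>
                 \<le> real q * nu * (1 / (4 * real k * L))"
    and cnt: "\<forall>v<d. (\<Sum>j\<in>{1..q}. \<bar>Wa j v\<bar>) \<le> 2 * real q * real k / real d"
    and M: "2 * real k * sqrt (real ((K+1) * d ^ K)) * (10 * sqrt (real k)) ^ K \<le> M"
    and B: "2 * real k + 1 \<le> B"
  shows "is_PTF X V h fi K M B"
proof -
  define \<epsilon> where "\<epsilon> = 1 / (4 * real k * L)"
  have kL: "4 * real k * L > 0" using k1 L by simp
  have \<epsilon>0: "\<epsilon> > 0" using kL by (simp add: \<epsilon>_def)
  have \<epsilon>kL: "4 * real k * L * \<epsilon> = 1" unfolding \<epsilon>_def using kL by (metis divide_self_if mult_1_right less_irrefl times_divide_eq_right)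
  define D where "D = real q * nu"
  have D: "D > 0" using q nu by (simp add: D_def)
  define c0 where "c0 = 1 / ((1 + \<epsilon>) * D)"
  have c0: "c0 > 0" using D \<epsilon>0 by (simp add: c0_def)
  define zz where "zz v = (\<Sum>j\<in>{1..q}. pconst (c0 * Wa j v) * pvar (a, j))" for v
  define Q where "Q = (\<Sum>l<d. pconst (2 * w l) * pcomp (P l) zz)"
  define B0 where "B0 = 10 * sqrt (real k)"
  have sk1: "1 \<le> sqrt (real k)" using k1 by simp
  have B0: "1 \<le> B0" unfolding B0_def using sk1 by linarith
  have zz_vars: "rpoly_vars (zz v) \<subseteq> V" for v
    unfolding zz_def
  proof (rule vars_sum)
    fix j assume "j \<in> {1..q}"
    then show "rpoly_vars (pconst (c0 * Wa j v) * pvar (a, j)) \<subseteq> V"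
      using V by (intro order_trans[OF vars_pconst_mult]) auto
  qed
  have zz_deg: "rpoly_deg_le (zz v) 1" for v
    unfolding zz_def
  proof (rule deg_le_sum)
    fix j
    show "rpoly_deg_le (pconst (c0 * Wa j v) * pvar (a, j)) 1"
      using deg_le_mult[OF deg_le_pconst[of _ 0] deg_le_pvar[of 1]] by simp
  qed
  have zz_eval: "rpoly_eval (zz v) y = c0 * (\<Sum>j\<in>{1..q}. Wa j v * y (a, j))" for v y
    unfolding zz_def by (simp add: eval_sum eval_mult sum_distrib_left mult.assoc)
  have zz_n1: "n1 (zz v) \<le> B0" if v: "v < d" for v
  proof -
    have "n1 (zz v) \<le> (\<Sum>j\<in>{1..q}. n1 (pconst (c0 * Wa j v) * pvar (a, j)))"
      unfolding zz_def by (rule n1_sum)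
    also have "\<dots> \<le> (\<Sum>j\<in>{1..q}. c0 * \<bar>Wa j v\<bar>)"
    proof (rule sum_mono)
      fix j
      have "n1 (pconst (c0 * Wa j v) * pvar (a, j)) \<le> n1 (pconst (c0 * Wa j v) :: (nat \<times> nat) rpoly) * n1 (pvar (a, j))"
        by (rule n1_mult)
      then show "n1 (pconst (c0 * Wa j v) * pvar (a, j)) \<le> c0 * \<bar>Wa j v\<bar>"
        using c0 by (simp add: abs_mult)
    qed
    also have "\<dots> = c0 * (\<Sum>j\<in>{1..q}. \<bar>Wa j v\<bar>)" by (simp add: sum_distrib_left)
    also have "\<dots> \<le> c0 * (2 * real q * real k / real d)"
      using cnt v c0 by (intro mult_left_mono) auto
    also have "\<dots> \<le> 2 * real k / (real d * nu)"
    proof -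
      define Y where "Y = 2 * real k / (real d * nu)"
      have nz: "real q \<noteq> 0" "real d \<noteq> 0" "nu \<noteq> 0" "1 + \<epsilon> \<noteq> 0" "D \<noteq> 0" using q d nu \<epsilon>0 D by auto
      have Y0: "0 \<le> Y" using nu by (simp add: Y_def)
      have X: "2 * real q * real k / real d = D * Y" unfolding D_def Y_def using nz by (simp add: field_simps)
      have "c0 * (D * Y) = (Y * D) / ((1 + \<epsilon>) * D)" unfolding c0_def by (simp add: mult.commute)
      also have "\<dots> = Y / (1 + \<epsilon>)" using nz(5) by (rule nonzero_mult_divide_mult_cancel_right)
      also have "\<dots> \<le> Y / 1" using Y0 \<epsilon>0 by (intro divide_left_mono) auto
      finally show ?thesis unfolding X Y_def by simp
    qed
    also have "\<dots> \<le> B0"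
    proof -
      have dn: "real d * nu > 0" using nu d by simp
      have "2 * real k = 10 * sqrt (real k) * (sqrt (real k) / 5)" by simp
      also have "\<dots> \<le> 10 * sqrt (real k) * (real d * nu)" using nu(2) by (intro mult_left_mono) auto
      finally have "2 * real k \<le> B0 * (real d * nu)" by (simp add: B0_def)
      then show ?thesis using dn by (simp add: pos_divide_le_eq)
    qed
    finally show ?thesis .
  qed
  show ?thesis
    unfolding is_PTF_def
  proof (intro exI[of _ Q] conjI ballI)
    show "rpoly_vars Q \<subseteq> V"
      unfolding Q_def
    proof (rule vars_sum)
      fix l
      show "rpoly_vars (pconst (2 * w l) * pcomp (P l) zz) \<subseteq> V"
        by (rule order_trans[OF vars_pconst_mult], rule vars_pcomp, rule zz_vars)
    qed
    show "rpoly_deg_le Q K"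
      unfolding Q_def
    proof (rule deg_le_sum)
      fix l assume "l \<in> {..<d}"
      then have "rpoly_deg_le (P l) K" using PP by auto
      then have "rpoly_deg_le (pcomp (P l) zz) K" by (intro deg_le_pcomp zz_deg)
      then show "rpoly_deg_le (pconst (2 * w l) * pcomp (P l) zz) K"
        using deg_le_mult[OF deg_le_pconst[of _ 0]] by fastforce
    qed
    have "coeff_norm Q \<le> n1 Q" by (rule coeff_norm_le_n1)
    also have "\<dots> \<le> (\<Sum>l<d. n1 (pconst (2 * w l) * pcomp (P l) zz))" unfolding Q_def by (rule n1_sum)
    also have "\<dots> \<le> (\<Sum>l<d. \<bar>w l\<bar> * (2 * sqrt (real ((K+1) * d ^ K)) * B0 ^ K))"
    proof (rule sum_mono)
      fix l assume l: "l \<in> {..<d}"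
      have ext: "is_multilinear_ext d (p l) (P l)" and dg: "rpoly_deg_le (P l) K"
        and pm: "\<forall>x\<in>cube d. p l x \<in> {-1,1}" using PP l by auto
      have vP: "rpoly_vars (P l) \<subseteq> {..<d}" using ext by (simp add: is_multilinear_ext_def)
      have nP: "n1 (P l) \<le> sqrt (real ((K+1) * d ^ K))" by (rule n1_ml_bound[OF ext pm dg d])
      have "n1 (pcomp (P l) zz) \<le> n1 (P l) * B0 ^ K"
        by (rule n1_pcomp[OF _ B0 dg]) (use vP zz_n1 in auto)
      also have "\<dots> \<le> sqrt (real ((K+1) * d ^ K)) * B0 ^ K"
        by (rule mult_right_mono[OF nP]) (use B0 in simp)
      finally have nc: "n1 (pcomp (P l) zz) \<le> sqrt (real ((K+1) * d ^ K)) * B0 ^ K" .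
      have "n1 (pconst (2 * w l) * pcomp (P l) zz) \<le> n1 (pconst (2 * w l) :: (nat \<times> nat) rpoly) * n1 (pcomp (P l) zz)"
        by (rule n1_mult)
      also have "\<dots> = \<bar>2 * w l\<bar> * n1 (pcomp (P l) zz)" by simp
      also have "\<dots> \<le> \<bar>2 * w l\<bar> * (sqrt (real ((K+1) * d ^ K)) * B0 ^ K)"
        by (rule mult_left_mono[OF nc]) simp
      finally show "n1 (pconst (2 * w l) * pcomp (P l) zz) \<le> \<bar>w l\<bar> * (2 * sqrt (real ((K+1) * d ^ K)) * B0 ^ K)"
        by (simp add: abs_mult mult_ac)
    qed
    also have "\<dots> = real k * (2 * sqrt (real ((K+1) * d ^ K)) * B0 ^ K)"
      using Wdk_sum[OF w] by (simp only: sum_distrib_right[symmetric])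
    also have "\<dots> = 2 * real k * sqrt (real ((K+1) * d ^ K)) * (10 * sqrt (real k)) ^ K"
      by (simp add: B0_def mult_ac)
    finally show "coeff_norm Q \<le> M" using M by linarith
    fix x assume x: "x \<in> X"
    define z where "z = Ga x"
    have z: "z \<in> cube d" using Ga x by (simp add: z_def)
    define zh where "zh v = rpoly_eval (zz v) (h x)" for v
    have zh: "\<bar>zh v\<bar> \<le> 1 \<and> \<bar>zh v - z v\<bar> \<le> 2 * \<epsilon>" if v: "v < d" for v
    proof -
      define T where "T = (\<Sum>j\<in>{1..q}. Wa j v * sgn (\<Sum>l<d. Wa j l * Ga x l))"
      have "zh v = c0 * T"
        unfolding zh_def zz_eval T_def using h x by (intro arg_cong[where f="\<lambda>t. c0 * t"] sum.cong) auto
      then have zhT: "zh v = T / ((1 + \<epsilon>) * D)" by (simp add: c0_def)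
      have Tb: "\<bar>T - D * z v\<bar> \<le> D * \<epsilon>" using conc x v by (simp add: T_def D_def z_def \<epsilon>_def)
      have zv: "\<bar>z v\<bar> = 1" using cube_val[OF z v] by auto
      show ?thesis unfolding zhT using approx_aux[OF D \<epsilon>0 zv Tb] by simp
    qed
    let ?S = "\<Sum>l<d. w l * Gi x l"
    have evQ: "rpoly_eval Q (h x) = (\<Sum>l<d. 2 * w l * rpoly_eval (P l) zh)"
    proof -
      have zh_eq: "(\<lambda>v. rpoly_eval (zz v) (h x)) = zh" by (rule ext) (simp add: zh_def)
      show ?thesis unfolding Q_def by (simp add: eval_sum eval_mult eval_pcomp zh_eq)
    qed
    have lipl: "\<bar>rpoly_eval (P l) zh - Gi x l\<bar> \<le> L * (2 * \<epsilon>)" if l: "l < d" for l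
    proof -
      have lip: "lipschitz_box d L (P l)" and ext: "is_multilinear_ext d (p l) (P l)" using PP l by auto
      have box: "\<forall>v<d. \<bar>zh v\<bar> \<le> 1 \<and> \<bar>z v\<bar> \<le> 1" using zh cube_val[OF z] by fastforce
      have "\<bar>rpoly_eval (P l) zh - rpoly_eval (P l) z\<bar> \<le> L * Max ((\<lambda>v. \<bar>zh v - z v\<bar>) ` {..<d})"
        using lip box unfolding lipschitz_box_def by blast
      also have "\<dots> \<le> L * (2 * \<epsilon>)"
        using L by (intro mult_left_mono max_box_le[OF d]) (use zh in auto)
      also have "rpoly_eval (P l) z = Gi x l"
        using ext z Gi x l by (auto simp: is_multilinear_ext_def z_def)
      finally show ?thesis .
    qed
    have "\<bar>rpoly_eval Q (h x) - 2 * ?S\<bar> = \<bar>\<Sum>l<d. 2 * w l * (rpoly_eval (P l) zh - Gi x l)\<bar>"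
      unfolding evQ by (simp add: sum_distrib_left sum_subtractf[symmetric] algebra_simps)
    also have "\<dots> \<le> (\<Sum>l<d. \<bar>2 * w l * (rpoly_eval (P l) zh - Gi x l)\<bar>)" by (rule sum_abs)
    also have "\<dots> \<le> (\<Sum>l<d. \<bar>w l\<bar> * (4 * L * \<epsilon>))"
    proof (rule sum_mono)
      fix l assume "l \<in> {..<d}"
      then have "\<bar>rpoly_eval (P l) zh - Gi x l\<bar> \<le> L * (2 * \<epsilon>)" using lipl by auto
      then have m: "\<bar>w l\<bar> * \<bar>rpoly_eval (P l) zh - Gi x l\<bar> \<le> \<bar>w l\<bar> * (L * (2 * \<epsilon>))" by (rule mult_left_mono) simp
      have e1: "\<bar>2 * w l * (rpoly_eval (P l) zh - Gi x l)\<bar> = 2 * (\<bar>w l\<bar> * \<bar>rpoly_eval (P l) zh - Gi x l\<bar>)"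
        by (simp only: abs_mult abs_numeral mult.assoc)
      have e2: "\<bar>w l\<bar> * (4 * L * \<epsilon>) = 2 * (\<bar>w l\<bar> * (L * (2 * \<epsilon>)))" by (simp add: algebra_simps)
      show "\<bar>2 * w l * (rpoly_eval (P l) zh - Gi x l)\<bar> \<le> \<bar>w l\<bar> * (4 * L * \<epsilon>)"
        unfolding e1 e2 using m by linarith
    qed
    also have "\<dots> = real k * (4 * L * \<epsilon>)" using Wdk_sum[OF w] by (simp only: sum_distrib_right[symmetric])
    also have "\<dots> = 1" using \<epsilon>kL by (simp add: mult_ac)
    finally have close: "\<bar>rpoly_eval Q (h x) - 2 * ?S\<bar> \<le> 1" .
    have Gix: "Gi x \<in> cube d" using Gi x by auto
    have S1: "1 \<le> \<bar>?S\<bar>" "\<bar>?S\<bar> \<le> real k" using odd_sum_bounds[OF w Gix k] by auto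
    have fx: "fi x = sgn ?S" using fi x by auto
    show "1 \<le> rpoly_eval Q (h x) * fi x" "rpoly_eval Q (h x) * fi x \<le> B"
      using final_aux[OF close S1] B unfolding fx by auto
  qed
qed

lemma hier_intro:
  fixes f :: "nat \<times> nat \<Rightarrow> (nat \<Rightarrow> real) \<Rightarrow> real" and K :: nat and M B :: real
  assumes K: "K \<ge> 1" and M: "1 \<le> M" and B: "1 \<le> B"
    and pm: "\<forall>i\<in>{1..r}. \<forall>j\<in>{1..q}. \<forall>x\<in>X. f (i,j) x \<in> {-1,1}"
    and l1: "\<forall>j\<in>{1..q}. is_PTF X {..<d} (\<lambda>x. x) (f (1,j)) K M B"
    and li: "\<forall>i\<in>{2..r}. \<forall>j\<in>{1..q}. is_PTF X (levels q (i-1)) (\<lambda>x m'. f m' x) (f (i,j)) K M B"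
  shows "has_hierarchy X d r (levels q) f K M B"
  unfolding has_hierarchy_def
proof (intro conjI ballI)
  fix i assume "i \<in> {1..<r}"
  then show "levels q i \<subseteq> levels q (Suc i)" by (auto simp: levels_def)
next
  fix m assume "m \<in> levels q 1"
  then obtain j where m: "m = (1, j)" "j \<in> {1..q}" by (auto simp: levels_def)
  then show "is_PTF X {..<d} (\<lambda>x. x) (f m) K M B" using l1 by simp
next
  fix i m assume i: "i \<in> {2..r}" and m: "m \<in> levels q i"
  obtain i' j where m': "m = (i', j)" "i' \<in> {1..i}" "j \<in> {1..q}" using m by (auto simp: levels_def)
  show "is_PTF X (levels q (i - 1)) (\<lambda>x m'. f m' x) (f m) K M B"
  proof (cases "i' = i")
    case True then show ?thesis using li i m' by simp
  next
    case False
    then have mi: "m \<in> levels q (i - 1)" using m' i by (auto simp: levels_def)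
    have "\<forall>x\<in>X. f m x \<in> {-1,1} \<and> f m x = f m x" using pm m' i by auto
    then show ?thesis by (intro ptf_var[OF mi _ M B K]) simp
  qed
qed

lemma prob_lower:
  fixes \<Omega> Bad H :: "'a set" and \<delta> :: real
  assumes fin: "finite \<Omega>" "\<Omega> \<noteq> {}" and BO: "Bad \<subseteq> \<Omega>" and good: "\<Omega> - Bad \<subseteq> H"
    and cb: "real (card Bad) \<le> \<delta> * real (card \<Omega>)"
  shows "measure_pmf.prob (pmf_of_set \<Omega>) H \<ge> 1 - \<delta>"
proof -
  have N: "real (card \<Omega>) > 0" using fin by (simp add: card_gt_0_iff)
  have "\<Omega> \<subseteq> (\<Omega> \<inter> H) \<union> Bad" using good by auto
  then have "card \<Omega> \<le> card ((\<Omega> \<inter> H) \<union> Bad)" using fin BO by (intro card_mono) (auto intro: finite_subset)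
  also have "\<dots> \<le> card (\<Omega> \<inter> H) + card Bad" by (rule card_Un_le)
  finally have "real (card \<Omega>) \<le> real (card (\<Omega> \<inter> H)) + real (card Bad)" by linarith
  then have "real (card \<Omega>) * (1 - \<delta>) \<le> real (card (\<Omega> \<inter> H))" using cb by (simp add: algebra_simps)
  then have "1 - \<delta> \<le> real (card (\<Omega> \<inter> H)) / real (card \<Omega>)" using N by (simp add: pos_le_divide_eq mult.commute)
  also have "\<dots> = measure_pmf.prob (pmf_of_set \<Omega>) H" using fin by (simp add: measure_pmf_of_set)
  finally show ?thesis .
qed

lemma tailJ:
  fixes g :: "(nat \<Rightarrow> real) \<Rightarrow> real" and a r q d k :: nat and t :: real
  assumes a: "a \<in> {1..r}" and kd: "k \<le> d" and k1: "1 \<le> k"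
    and gb: "\<forall>w\<in>Wdk d k. \<bar>g w\<bar> \<le> 1"
    and g2: "(\<Sum>w\<in>Wdk d k. (g w)^2) \<le> (real k / real d) * real (card (Wdk d k))"
    and t: "0 < t" "t \<le> 2 * (real k / real d)"
  shows "real (card {W \<in> PiE ({1..r} \<times> {1..q}) (\<lambda>_. Wdk d k).
            real q * ((\<Sum>w\<in>Wdk d k. g w) / real (card (Wdk d k)) + t) \<le> (\<Sum>j\<in>{1..q}. g (W (a, j)))})
         \<le> exp (- real q * t^2 / (4 * (real k / real d))) * real (card (PiE ({1..r} \<times> {1..q}) (\<lambda>_. Wdk d k)))"
proof -
  let ?J = "(\<lambda>j. (a, j)) ` {1..q}"
  have inj: "inj_on (\<lambda>j. (a, j)) {1..q}" by (auto simp: inj_on_def)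
  have cJ: "card ?J = q" using card_image[OF inj] by simp
  have sJ: "(\<Sum>i\<in>?J. g (W i)) = (\<Sum>j\<in>{1..q}. g (W (a, j)))" for W
    using sum.reindex[OF inj, of "\<lambda>i. g (W i)"] by simp
  have JI: "?J \<subseteq> {1..r} \<times> {1..q}" using a by auto
  have s2: "real k / real d > 0" using k1 kd by simp
  have T: "real (card {W \<in> PiE ({1..r} \<times> {1..q}) (\<lambda>_. Wdk d k). real (card ?J) * ((\<Sum>w\<in>Wdk d k. g w) / real (card (Wdk d k)) + t) \<le> (\<Sum>i\<in>?J. g (W i))})
     \<le> exp (- real (card ?J) * t^2 / (4 * (real k / real d))) * real (card (PiE ({1..r} \<times> {1..q}) (\<lambda>_. Wdk d k)))"
    by (rule tail_bound[OF _ _ _ JI _ s2 g2 t]) (use gb Wdk_nonempty[OF kd] in auto)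
  show ?thesis using T unfolding cJ sJ .
qed

lemma main6:
  fixes K :: nat and d :: nat and X :: "(nat \<Rightarrow> real) set" and r q :: nat and L :: real and k :: nat
    and G :: "nat \<Rightarrow> (nat \<Rightarrow> real) \<Rightarrow> (nat \<Rightarrow> real)" and p :: "nat \<Rightarrow> nat \<Rightarrow> (nat \<Rightarrow> real) \<Rightarrow> real"
  assumes K: "K \<ge> 1"
    and X: "X \<subseteq> cube d" and r: "r \<ge> 1" and q: "q \<ge> 1" and L0: "L > 0" and k: "odd k" and k1: "1 \<le> k" and kd: "k \<le> d"
    and Gc: "\<forall>i\<le>r. \<forall>x\<in>cube d. G i x \<in> cube d"
    and G0: "\<forall>x\<in>cube d. G 0 x = x"
    and hp: "\<forall>i\<in>{1..r}. \<forall>j<d.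
         (\<forall>x\<in>cube d. p i j x \<in> {-1, 1}) \<and>
         (\<exists>P. is_multilinear_ext d (p i j) P \<and> rpoly_deg_le P K \<and> lipschitz_box d L P) \<and>
         (\<forall>x\<in>X. G i x j = p i j (G (i - 1) x))"
  shows "measure_pmf.prob (pmf_of_set (PiE ({1..r} \<times> {1..q}) (\<lambda>_. Wdk d k)))
        {W. has_hierarchy X d r (levels q) (fstar d G W) K ((2 * (real K + 1) * 10 ^ K) * real k * real d ^ K) (2 * real k + 1)}
      \<ge> 1 - 4 * real d * real r * real q * real (card X) * exp (- (1/1600) * real q / (L^2 * real k^2 * real d))"
proof -
  let ?Wd = "Wdk d k" and ?I = "{1..r} \<times> {1..q}"
  let ?\<Omega> = "PiE ?I (\<lambda>_. ?Wd)"
  let ?M = "(2 * (real K + 1) * 10 ^ K) * real k * real d ^ K"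
  let ?B = "2 * real k + 1"
  let ?H = "{W. has_hierarchy X d r (levels q) (fstar d G W) K ?M ?B}"
  define \<delta> where "\<delta> = exp (- (1/1600) * real q / (L^2 * real k^2 * real d))"
  have d1: "d \<ge> 1" using k1 kd by simp
  have finX: "finite X" using X finite_subset finite_cube by blast
  have finO: "finite ?\<Omega>" by (simp add: finite_PiE)
  have neO: "?\<Omega> \<noteq> {}" using Wdk_nonempty[OF kd] by (simp add: PiE_eq_empty_iff)
  have M1: "1 \<le> ?M"
  proof -
    have a1: "1 \<le> (10::real) ^ K" by (simp add: one_le_power)
    have a2: "1 \<le> 2 * (real K + 1)" by simp
    have "1 * 1 \<le> 2 * (real K + 1) * 10 ^ K" by (intro mult_mono a1 a2) auto
    then have a: "1 \<le> 2 * (real K + 1) * 10 ^ K" by simp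
    have b: "1 \<le> real k" using k1 by simp
    have c: "1 \<le> real d ^ K" using d1 by (simp add: one_le_power)
    have "1 * 1 * 1 \<le> (2 * (real K + 1) * 10 ^ K) * real k * real d ^ K"
      by (intro mult_mono a b c) auto
    then show ?thesis by simp
  qed
  have B1: "1 \<le> ?B" by simp
  have "\<forall>i j. \<exists>P. i \<in> {1..r} \<and> j < d \<longrightarrow> is_multilinear_ext d (p i j) P \<and> rpoly_deg_le P K \<and> lipschitz_box d L P"
    using hp by blast
  then obtain PP where PP0: "\<forall>i j. i \<in> {1..r} \<and> j < d \<longrightarrow> is_multilinear_ext d (p i j) (PP i j) \<and> rpoly_deg_le (PP i j) K \<and> lipschitz_box d L (PP i j)"
    by metis
  have PP: "\<And>i j. i \<in> {1..r} \<Longrightarrow> j < d \<Longrightarrow> is_multilinear_ext d (p i j) (PP i j) \<and> rpoly_deg_le (PP i j) K \<and> lipschitz_box d L (PP i j)"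
    using PP0 by blast
  have pm: "\<And>i j. i \<in> {1..r} \<Longrightarrow> j < d \<Longrightarrow> \<forall>x\<in>cube d. p i j x \<in> {-1,1}" using hp by blast
  have GX: "\<And>i j x. i \<in> {1..r} \<Longrightarrow> j < d \<Longrightarrow> x \<in> X \<Longrightarrow> G i x j = p i j (G (i - 1) x)" using hp by blast
  have GcX: "\<And>i x. i \<le> r \<Longrightarrow> x \<in> X \<Longrightarrow> G i x \<in> cube d" using Gc X by blast
  have WO: "\<And>W i j. W \<in> ?\<Omega> \<Longrightarrow> i \<in> {1..r} \<Longrightarrow> j \<in> {1..q} \<Longrightarrow> W (i, j) \<in> ?Wd"
    by (auto simp: PiE_def Pi_def)
  have fdef: "\<And>W i j x. fstar d G W (i, j) x = sgn (\<Sum>l<d. W (i, j) l * G i x l)"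
    by (simp add: fstar_def)
  have fpm: "\<forall>i\<in>{1..r}. \<forall>j\<in>{1..q}. \<forall>x\<in>X. fstar d G W (i, j) x \<in> {-1,1}" if W: "W \<in> ?\<Omega>" for W
  proof (intro ballI)
    fix i j x assume i: "i \<in> {1..r}" and j: "j \<in> {1..q}" and x: "x \<in> X"
    show "fstar d G W (i, j) x \<in> {-1,1}"
      unfolding fdef by (rule sgn_odd_sum[OF WO[OF W i j] GcX[of i x] k]) (use i x in auto)
  qed
  have lev1: "\<forall>j\<in>{1..q}. is_PTF X {..<d} (\<lambda>x. x) (fstar d G W (1, j)) K ?M ?B" if W: "W \<in> ?\<Omega>" for W
  proof
    fix j assume j: "j \<in> {1..q}"
    have r1: "(1::nat) \<in> {1..r}" using r by simp
    show "is_PTF X {..<d} (\<lambda>x. x) (fstar d G W (1, j)) K ?M ?B"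
    proof (rule ptf_level1[OF d1 k X WO[OF W r1 j], where p = "p 1" and P = "PP 1" and Gf = "G 1"])
      show "\<forall>l<d. is_multilinear_ext d (p 1 l) (PP 1 l) \<and> rpoly_deg_le (PP 1 l) K \<and> (\<forall>x\<in>cube d. p 1 l x \<in> {-1,1})"
        using PP[OF r1] pm[OF r1] by blast
      show "\<forall>x\<in>X. G 1 x \<in> cube d \<and> (\<forall>l<d. G 1 x l = p 1 l x)"
      proof (intro ballI conjI allI impI)
        fix x assume x: "x \<in> X"
        show "G 1 x \<in> cube d" using GcX[of 1 x] r x by simp
        fix l assume l: "l < d"
        have "G 1 x l = p 1 l (G 0 x)" using GX[OF r1 l x] by simp
        also have "G 0 x = x" using G0 X x by blast
        finally show "G 1 x l = p 1 l x" .
      qed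
      show "\<forall>x\<in>X. fstar d G W (1, j) x = sgn (\<Sum>l<d. W (1, j) l * G 1 x l)" by (simp add: fdef)
      show "real k * sqrt (real ((K + 1) * d ^ K)) \<le> ?M" by (rule M_bound1[OF d1])
      show "real k \<le> ?B" by simp
    qed
  qed
  have rhs_le1: "1 - 4 * real d * real r * real q * real (card X) * \<delta> \<le> 1"
    unfolding \<delta>_def by simp
  show ?thesis
  proof (cases "L < 1")
    case True
    have const: "G i x = G i y" if i: "i \<in> {1..r}" and x: "x \<in> X" and y: "y \<in> X" for i x y
    proof
      fix l
      show "G i x l = G i y l"
      proof (cases "l < d")
        case True
        have ext: "is_multilinear_ext d (p i l) (PP i l)" and lip: "lipschitz_box d L (PP i l)"
          using PP[OF i True] by auto
        have cx: "G (i - 1) x \<in> cube d" "G (i - 1) y \<in> cube d" using GcX i x y by auto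
        have "G i x l = p i l (G (i - 1) x)" using GX[OF i True x] .
        also have "\<dots> = p i l (G (i - 1) y)"
          by (rule lip_const[OF ext lip \<open>L < 1\<close> pm[OF i True] d1 cx])
        also have "\<dots> = G i y l" using GX[OF i True y] by simp
        finally show ?thesis .
      next
        case False
        have "G i x \<in> cube d" "G i y \<in> cube d" using GcX i x y by auto
        then show ?thesis using False by (simp add: cube_def)
      qed
    qed
    have cPTF: "is_PTF X V h (fstar d G W (i, j)) K ?M ?B"
      if W: "W \<in> ?\<Omega>" and i: "i \<in> {1..r}" and j: "j \<in> {1..q}" for W i j V h
    proof (cases "X = {}")
      case True then show ?thesis by (intro ptf_const[of 1 _ _ ?M ?B]) (use M1 in auto)
    next
      case False
      then obtain x0 where x0: "x0 \<in> X" by auto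
      have s: "fstar d G W (i, j) x0 \<in> {-1,1}" using fpm[OF W] i j x0 by auto
      have "\<forall>x\<in>X. fstar d G W (i, j) x = fstar d G W (i, j) x0"
        using const[OF i _ x0] by (simp add: fdef)
      then show ?thesis by (intro ptf_const[OF s _ M1 B1])
    qed
    have "?\<Omega> - {} \<subseteq> ?H"
    proof
      fix W assume "W \<in> ?\<Omega> - {}"
      then have W: "W \<in> ?\<Omega>" by simp
      have "has_hierarchy X d r (levels q) (fstar d G W) K ?M ?B"
      proof (rule hier_intro[OF K M1 B1 fpm[OF W]])
        show "\<forall>j\<in>{1..q}. is_PTF X {..<d} (\<lambda>x. x) (fstar d G W (1, j)) K ?M ?B" by (rule lev1[OF W])
        show "\<forall>i\<in>{2..r}. \<forall>j\<in>{1..q}. is_PTF X (levels q (i - 1)) (\<lambda>x m'. fstar d G W m' x) (fstar d G W (i, j)) K ?M ?B"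
        proof (intro ballI)
          fix i j assume i: "i \<in> {2..r}" and j: "j \<in> {1..q}"
          have i1: "i \<in> {1..r}" using i by simp
          show "is_PTF X (levels q (i - 1)) (\<lambda>x m'. fstar d G W m' x) (fstar d G W (i, j)) K ?M ?B"
            by (rule cPTF[OF W i1 j])
        qed
      qed
      then show "W \<in> ?H" by simp
    qed
    then have "measure_pmf.prob (pmf_of_set ?\<Omega>) ?H \<ge> 1 - 0"
      by (intro prob_lower[OF finO neO]) auto
    then show ?thesis using rhs_le1 unfolding \<delta>_def by linarith
  next
    case False
    then have L: "L \<ge> 1" by simp
    define N where "N = real (card ?Wd)"
    have N: "N > 0" using Wdk_nonempty[OF kd] by (simp add: N_def card_gt_0_iff)
    define \<nu> where "\<nu> = nu d k"
    have d0: "0 < d" using d1 by simp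
    define S0 where "S0 = (\<Sum>w\<in>?Wd. w 0 * sgn (\<Sum>m<d. w m))"
    have nuS: "\<nu> = S0 / N" by (simp add: \<nu>_def nu_def S0_def N_def)
    have dS0: "real d * S0 \<ge> N * sqrt (real k) / 5"
      using nu_d[OF d0, of k] sum_abs_lower[OF kd] by (simp add: S0_def N_def)
    have nuL: "sqrt (real k) / 5 \<le> real d * \<nu>"
      using dS0 N by (simp add: nuS pos_le_divide_eq mult.commute mult.left_commute)
    have sk0: "sqrt (real k) > 0" using k1 by simp
    have nu0: "\<nu> > 0"
    proof -
      have "real d * \<nu> > 0" using nuL sk0 by linarith
      then show ?thesis using d0 by (simp add: zero_less_mult_iff)
    qed
    have abs0: "real d * (\<Sum>w\<in>?Wd. \<bar>w l\<bar>) = real k * N" if "l < d" for l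
      using sum_Wdk_abs[OF that] by (simp add: N_def)
    have nuU: "\<nu> \<le> real k / real d"
    proof -
      have "S0 \<le> (\<Sum>w\<in>?Wd. \<bar>w 0\<bar>)" unfolding S0_def
      proof (rule sum_mono)
        fix w :: "nat \<Rightarrow> real"
        have "\<bar>sgn (\<Sum>m<d. w m)\<bar> \<le> 1" by (simp add: abs_sgn_eq)
        then have "w 0 * sgn (\<Sum>m<d. w m) \<le> \<bar>w 0\<bar> * 1"
          by (metis abs_ge_self abs_ge_zero abs_mult mult_left_mono order_trans)
        then show "w 0 * sgn (\<Sum>m<d. w m) \<le> \<bar>w 0\<bar>" by simp
      qed
      also have "\<dots> = real k * N / real d" using abs0[OF d0] d0 by (simp add: field_simps)
      finally show ?thesis using N by (simp add: nuS divide_le_eq field_simps)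
    qed
    define \<epsilon> where "\<epsilon> = 1 / (4 * real k * L)"
    have \<epsilon>0: "\<epsilon> > 0" using k1 L by (simp add: \<epsilon>_def)
    have \<epsilon>4: "\<epsilon> \<le> 1/4"
    proof -
      have "1 \<le> 4 * real k * L / 4" using k1 L by (simp add: mult_ge1_I)
      then show ?thesis unfolding \<epsilon>_def by (simp add: divide_le_eq field_simps)
    qed
    define g1 where "g1 a x v = (\<lambda>w::nat \<Rightarrow> real. w v * sgn (\<Sum>m<d. w m * G a x m))" for a x v
    define BU where "BU a x v = {W \<in> ?\<Omega>. real q * ((\<Sum>w\<in>?Wd. g1 a x v w) / real (card ?Wd) + \<nu> * \<epsilon>)
        \<le> (\<Sum>j\<in>{1..q}. g1 a x v (W (a, j)))}" for a x v
    define BL where "BL a x v = {W \<in> ?\<Omega>. real q * ((\<Sum>w\<in>?Wd. - g1 a x v w) / real (card ?Wd) + \<nu> * \<epsilon>)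
        \<le> (\<Sum>j\<in>{1..q}. - g1 a x v (W (a, j)))}" for a x v
    define BC where "BC a v = {W \<in> ?\<Omega>. real q * ((\<Sum>w\<in>?Wd. \<bar>w v\<bar>) / real (card ?Wd) + real k / real d)
        \<le> (\<Sum>j\<in>{1..q}. \<bar>W (a, j) v\<bar>)}" for a v
    have sq_abs: "(w v)^2 = \<bar>w v\<bar>" if "w \<in> ?Wd" for w v
      using Wdk_sq[OF that] by (simp add: power2_eq_square)
    have g1b: "\<bar>g1 a x v w\<bar> \<le> 1" if "w \<in> ?Wd" for a x v w
    proof -
      have "\<bar>g1 a x v w\<bar> = \<bar>w v\<bar> * \<bar>sgn (\<Sum>m<d. w m * G a x m)\<bar>" by (simp add: g1_def abs_mult)
      also have "\<dots> \<le> 1 * 1" using Wdk_abs_le[OF that] by (intro mult_mono) (auto simp: abs_sgn_eq)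
      finally show ?thesis by simp
    qed
    have g1sq: "(g1 a x v w)^2 \<le> \<bar>w v\<bar>" if "w \<in> ?Wd" for a x v w
    proof -
      have "(g1 a x v w)^2 = (w v)^2 * (sgn (\<Sum>m<d. w m * G a x m))^2" by (simp add: g1_def power_mult_distrib)
      also have "\<dots> \<le> (w v)^2 * 1" by (intro mult_left_mono) (auto simp: sgn_real_def)
      finally show ?thesis using sq_abs[OF that] by simp
    qed
    have sumabs: "(\<Sum>w\<in>?Wd. \<bar>w v\<bar>) = real k / real d * N" if "v < d" for v
      using abs0[OF that] d0 by (simp add: field_simps)
    have kd0: "real k / real d > 0" using k1 d0 by simp
    have tU: "\<nu> * \<epsilon> \<le> 2 * (real k / real d)"
    proof -
      have "\<nu> * \<epsilon> \<le> (real k / real d) * 1" using nuU \<epsilon>4 nu0 \<epsilon>0 by (intro mult_mono) auto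
      then show ?thesis using kd0 by linarith
    qed
    have t0: "\<nu> * \<epsilon> > 0" using nu0 \<epsilon>0 by simp
    have exU: "exp (- real q * (\<nu> * \<epsilon>)^2 / (4 * (real k / real d))) \<le> \<delta>"
    proof -
      have u2: "(real d * \<nu>)^2 \<ge> real k / 25"
      proof -
        have "(sqrt (real k) / 5)^2 \<le> (real d * \<nu>)^2" using nuL sk0 by (intro power_mono) auto
        then show ?thesis by (simp add: power_divide)
      qed
      have eq: "(\<nu> * \<epsilon>)^2 / (4 * (real k / real d)) = (real d * \<nu>)^2 / (64 * real k^3 * L^2 * real d)"
        unfolding \<epsilon>_def using k1 d0 L by (simp add: field_simps power2_eq_square power3_eq_cube)
      have "(1/1600) / (L^2 * real k^2 * real d) = (real k / 25) / (64 * real k^3 * L^2 * real d)"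
        using k1 d0 L by (simp add: field_simps power2_eq_square power3_eq_cube)
      also have "\<dots> \<le> (real d * \<nu>)^2 / (64 * real k^3 * L^2 * real d)"
        using u2 k1 d0 L by (intro divide_right_mono) auto
      finally have "(1/1600) / (L^2 * real k^2 * real d) \<le> (\<nu> * \<epsilon>)^2 / (4 * (real k / real d))" using eq by simp
      then have m: "real q * ((1/1600) / (L^2 * real k^2 * real d)) \<le> real q * ((\<nu> * \<epsilon>)^2 / (4 * (real k / real d)))"
        by (intro mult_left_mono) auto
      have e1: "- real q * (\<nu> * \<epsilon>)^2 / (4 * (real k / real d)) = - (real q * ((\<nu> * \<epsilon>)^2 / (4 * (real k / real d))))" by simp
      have e2: "- (1/1600) * real q / (L^2 * real k^2 * real d) = - (real q * ((1/1600) / (L^2 * real k^2 * real d)))" by simp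
      show ?thesis unfolding \<delta>_def e1 e2 using m by simp
    qed
    have exC: "exp (- real q * (real k / real d)^2 / (4 * (real k / real d))) \<le> \<delta>"
    proof -
      have eq: "(real k / real d)^2 / (4 * (real k / real d)) = real k / (4 * real d)"
        using k1 d0 by (simp add: field_simps power2_eq_square)
      have "(1/1600) / (L^2 * real k^2 * real d) \<le> 1 / (4 * real d)"
      proof -
        have "1 \<le> L^2 * real k^2" using L k1 by (simp add: one_le_power mult_ge1_I)
        then have "4 * real d \<le> 1600 * (L^2 * real k^2 * real d)" using d0 by (simp add: mult_ge1_I)
        then show ?thesis using d0 by (simp add: divide_simps)
      qed
      also have "\<dots> \<le> real k / (4 * real d)" using k1 d0 by (intro divide_right_mono) auto
      finally have "(1/1600) / (L^2 * real k^2 * real d) \<le> (real k / real d)^2 / (4 * (real k / real d))" using eq by simp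
      then have m: "real q * ((1/1600) / (L^2 * real k^2 * real d)) \<le> real q * ((real k / real d)^2 / (4 * (real k / real d)))"
        by (intro mult_left_mono) auto
      have e1: "- real q * (real k / real d)^2 / (4 * (real k / real d)) = - (real q * ((real k / real d)^2 / (4 * (real k / real d))))" by simp
      have e2: "- (1/1600) * real q / (L^2 * real k^2 * real d) = - (real q * ((1/1600) / (L^2 * real k^2 * real d)))" by simp
      show ?thesis unfolding \<delta>_def e1 e2 using m by simp
    qed
    have cBU: "real (card (BU a x v)) \<le> \<delta> * real (card ?\<Omega>)" if a: "a \<in> {1..r}" and v: "v < d" for a x v
    proof -
      have "real (card (BU a x v)) \<le> exp (- real q * (\<nu> * \<epsilon>)^2 / (4 * (real k / real d))) * real (card ?\<Omega>)"
        unfolding BU_def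
      proof (rule tailJ[OF a kd k1 _ _ t0 tU])
        show "\<forall>w\<in>?Wd. \<bar>g1 a x v w\<bar> \<le> 1" using g1b by blast
        have "(\<Sum>w\<in>?Wd. (g1 a x v w)^2) \<le> (\<Sum>w\<in>?Wd. \<bar>w v\<bar>)" by (rule sum_mono) (rule g1sq)
        then show "(\<Sum>w\<in>?Wd. (g1 a x v w)^2) \<le> real k / real d * real (card ?Wd)"
          using sumabs[OF v] by (simp add: N_def)
      qed
      also have "\<dots> \<le> \<delta> * real (card ?\<Omega>)" by (rule mult_right_mono[OF exU]) simp
      finally show ?thesis .
    qed
    have cBL: "real (card (BL a x v)) \<le> \<delta> * real (card ?\<Omega>)" if a: "a \<in> {1..r}" and v: "v < d" for a x v
    proof -
      have "real (card (BL a x v)) \<le> exp (- real q * (\<nu> * \<epsilon>)^2 / (4 * (real k / real d))) * real (card ?\<Omega>)"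
        unfolding BL_def
      proof (rule tailJ[OF a kd k1 _ _ t0 tU])
        show "\<forall>w\<in>?Wd. \<bar>- g1 a x v w\<bar> \<le> 1" using g1b by simp
        have "(\<Sum>w\<in>?Wd. (- g1 a x v w)^2) \<le> (\<Sum>w\<in>?Wd. \<bar>w v\<bar>)" by (rule sum_mono) (simp add: g1sq)
        then show "(\<Sum>w\<in>?Wd. (- g1 a x v w)^2) \<le> real k / real d * real (card ?Wd)"
          using sumabs[OF v] by (simp add: N_def)
      qed
      also have "\<dots> \<le> \<delta> * real (card ?\<Omega>)" by (rule mult_right_mono[OF exU]) simp
      finally show ?thesis .
    qed
    have cBC: "real (card (BC a v)) \<le> \<delta> * real (card ?\<Omega>)" if a: "a \<in> {1..r}" and v: "v < d" for a v
    proof -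
      have tC: "real k / real d \<le> 2 * (real k / real d)" using kd0 by simp
      have "real (card (BC a v)) \<le> exp (- real q * (real k / real d)^2 / (4 * (real k / real d))) * real (card ?\<Omega>)"
        unfolding BC_def
      proof (rule tailJ[OF a kd k1 _ _ kd0 tC])
        show "\<forall>w\<in>?Wd. \<bar>\<bar>w v\<bar>\<bar> \<le> 1" using Wdk_abs_le by simp
        have "(\<Sum>w\<in>?Wd. \<bar>w v\<bar>^2) = (\<Sum>w\<in>?Wd. \<bar>w v\<bar>)" by (rule sum.cong) (auto simp: sq_abs)
        then show "(\<Sum>w\<in>?Wd. \<bar>w v\<bar>^2) \<le> real k / real d * real (card ?Wd)"
          using sumabs[OF v] by (simp add: N_def)
      qed
      also have "\<dots> \<le> \<delta> * real (card ?\<Omega>)" by (rule mult_right_mono[OF exC]) simp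
      finally show ?thesis .
    qed
    define E where "E = {1..<r} \<times> X \<times> {..<d}"
    define F where "F e = (case e of (a, x, v) \<Rightarrow> BU a x v \<union> BL a x v \<union> BC a v)" for e
    define Bad where "Bad = (\<Union>e\<in>E. F e)"
    have finE: "finite E" using finX by (simp add: E_def)
    have FO: "F e \<subseteq> ?\<Omega>" for e by (auto simp: F_def BU_def BL_def BC_def split: prod.splits)
    have BadO: "Bad \<subseteq> ?\<Omega>" unfolding Bad_def by (rule UN_least) (rule FO)
    have cF: "real (card (F e)) \<le> 3 * \<delta> * real (card ?\<Omega>)" if e: "e \<in> E" for e
    proof -
      obtain a x v where av: "e = (a, x, v)" "a \<in> {1..r}" "v < d" using e by (auto simp: E_def)
      have "card (F e) \<le> card (BU a x v) + card (BL a x v) + card (BC a v)"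
        unfolding av F_def by (simp add: card_Un_le order_trans[OF card_Un_le] add_mono)
      then have "real (card (F e)) \<le> real (card (BU a x v)) + real (card (BL a x v)) + real (card (BC a v))"
        by linarith
      also have "\<dots> \<le> \<delta> * real (card ?\<Omega>) + \<delta> * real (card ?\<Omega>) + \<delta> * real (card ?\<Omega>)"
        using cBU[OF av(2,3), of x] cBL[OF av(2,3), of x] cBC[OF av(2,3)] by linarith
      finally show ?thesis by simp
    qed
    have "real (card Bad) \<le> (\<Sum>e\<in>E. real (card (F e)))"
    proof -
      have "card Bad \<le> (\<Sum>e\<in>E. card (F e))" unfolding Bad_def by (rule card_UN_le[OF finE])
      then show ?thesis by (simp add: of_nat_sum[symmetric] del: of_nat_sum)
    qed
    also have "\<dots> \<le> (\<Sum>e\<in>E. 3 * \<delta> * real (card ?\<Omega>))" by (rule sum_mono) (rule cF)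
    also have "\<dots> = real (card E) * (3 * \<delta> * real (card ?\<Omega>))" by simp
    also have "\<dots> \<le> (4 * real d * real r * real q * real (card X) * \<delta>) * real (card ?\<Omega>)"
    proof -
      have cE: "card E = (r - 1) * (card X * d)" using finX by (simp add: E_def card_cartesian_product)
      have "real (card E) \<le> real r * real q * real (card X) * real d"
      proof -
        have r1: "r * 1 \<le> r * q" using q by (intro mult_le_mono2)
        have rq: "r - 1 \<le> r * q" using r1 by linarith
        have "card E \<le> r * q * (card X * d)" unfolding cE using rq by (rule mult_le_mono1)
        then have "real (card E) \<le> real (r * q * (card X * d))" by (simp only: of_nat_le_iff)
        then show ?thesis by (simp add: mult_ac)
      qed
      moreover have "0 \<le> \<delta>" by (simp add: \<delta>_def)
      ultimately have "real (card E) * (3 * \<delta>) \<le> (real r * real q * real (card X) * real d) * (4 * \<delta>)"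
        by (intro mult_mono) auto
      then show ?thesis by (simp add: mult_ac) (simp add: mult.assoc[symmetric] mult_right_mono)
    qed
    finally have cBad: "real (card Bad) \<le> (4 * real d * real r * real q * real (card X) * \<delta>) * real (card ?\<Omega>)" .
    have good: "?\<Omega> - Bad \<subseteq> ?H"
    proof
      fix W assume WB: "W \<in> ?\<Omega> - Bad"
      then have W: "W \<in> ?\<Omega>" and nB: "W \<notin> Bad" by auto
      have nF: "W \<notin> BU a x v \<and> W \<notin> BL a x v \<and> W \<notin> BC a v" if "a \<in> {1..<r}" "x \<in> X" "v < d" for a x v
      proof -
        have "(a, x, v) \<in> E" using that by (simp add: E_def)
        then have "W \<notin> F (a, x, v)" using nB by (auto simp: Bad_def)
        then show ?thesis by (simp add: F_def)
      qed
      have "has_hierarchy X d r (levels q) (fstar d G W) K ?M ?B"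
      proof (rule hier_intro[OF K M1 B1 fpm[OF W] lev1[OF W]])
        show "\<forall>i\<in>{2..r}. \<forall>j\<in>{1..q}. is_PTF X (levels q (i - 1)) (\<lambda>x m'. fstar d G W m' x) (fstar d G W (i, j)) K ?M ?B"
        proof (intro ballI)
          fix i j assume i: "i \<in> {2..r}" and j: "j \<in> {1..q}"
          define a where "a = i - 1"
          have a: "a \<in> {1..<r}" "a \<in> {1..r}" "a \<le> r" using i by (auto simp: a_def)
          have i1: "i \<in> {1..r}" using i by simp
          show "is_PTF X (levels q (i - 1)) (\<lambda>x m'. fstar d G W m' x) (fstar d G W (i, j)) K ?M ?B"
          proof (cases "X = {}")
            case True then show ?thesis by (intro ptf_const[of 1 _ _ ?M ?B]) (use M1 in auto)
          next
            case False
            then obtain x0 where x0: "x0 \<in> X" by auto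
            have hWa: "\<forall>j\<in>{1..q}. W (a, j) \<in> ?Wd" using WO[OF W a(2)] by blast
            have hPP: "\<forall>l<d. is_multilinear_ext d (p i l) (PP i l) \<and> rpoly_deg_le (PP i l) K \<and> lipschitz_box d L (PP i l) \<and> (\<forall>x\<in>cube d. p i l x \<in> {-1,1})"
              using PP[OF i1] pm[OF i1] by blast
            have hGa: "\<forall>x\<in>X. G a x \<in> cube d" using GcX a by auto
            have hGi: "\<forall>x\<in>X. G i x \<in> cube d \<and> (\<forall>l<d. G i x l = p i l (G a x))"
              using GcX GX[OF i1] i by (auto simp: a_def)
            have hV: "\<forall>j\<in>{1..q}. (a, j) \<in> levels q (i - 1)" using a by (auto simp: levels_def a_def)
            have hh: "\<forall>x\<in>X. \<forall>j\<in>{1..q}. fstar d G W (a, j) x = sgn (\<Sum>l<d. W (a, j) l * G a x l)"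
              by (simp add: fdef)
            have hfi: "\<forall>x\<in>X. fstar d G W (i, j) x = sgn (\<Sum>l<d. W (i, j) l * G i x l)" by (simp add: fdef)
            have hconc: "\<forall>x\<in>X. \<forall>v<d. \<bar>(\<Sum>j\<in>{1..q}. W (a, j) v * sgn (\<Sum>l<d. W (a, j) l * G a x l)) - real q * \<nu> * G a x v\<bar>
                 \<le> real q * \<nu> * (1 / (4 * real k * L))"
            proof (intro ballI allI impI)
              fix x v assume x: "x \<in> X" and v: "v < d"
              have z: "G a x \<in> cube d" using hGa x by auto
              define T where "T = (\<Sum>j\<in>{1..q}. g1 a x v (W (a, j)))"
              have T: "T = (\<Sum>j\<in>{1..q}. W (a, j) v * sgn (\<Sum>l<d. W (a, j) l * G a x l))"
                by (simp add: T_def g1_def)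
              have sg: "(\<Sum>w\<in>?Wd. g1 a x v w) = G a x v * S0"
                unfolding g1_def S0_def by (rule sum_Wdk_corr[OF z v])
              have mg: "(\<Sum>w\<in>?Wd. g1 a x v w) / real (card ?Wd) = \<nu> * G a x v"
                using sg by (simp add: nuS N_def)
              have n1: "W \<notin> BU a x v" "W \<notin> BL a x v" using nF[OF a(1) x v] by auto
              have u: "T < real q * (\<nu> * G a x v + \<nu> * \<epsilon>)"
                using n1(1) W unfolding BU_def T_def mg by auto
              have sgn: "(\<Sum>w\<in>?Wd. - g1 a x v w) / real (card ?Wd) = - (\<nu> * G a x v)"
                using mg by (simp add: sum_negf)
              have lo: "- T < real q * (- (\<nu> * G a x v) + \<nu> * \<epsilon>)"
                using n1(2) W unfolding BL_def T_def sgn by (auto simp: sum_negf)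
              have "\<bar>T - real q * \<nu> * G a x v\<bar> \<le> real q * \<nu> * \<epsilon>"
                using u lo by (simp add: algebra_simps abs_le_iff)
              then show "\<bar>(\<Sum>j\<in>{1..q}. W (a, j) v * sgn (\<Sum>l<d. W (a, j) l * G a x l)) - real q * \<nu> * G a x v\<bar>
                 \<le> real q * \<nu> * (1 / (4 * real k * L))" unfolding T \<epsilon>_def .
            qed
            have hcnt: "\<forall>v<d. (\<Sum>j\<in>{1..q}. \<bar>W (a, j) v\<bar>) \<le> 2 * real q * real k / real d"
            proof (intro allI impI)
              fix v assume v: "v < d"
              have n3: "W \<notin> BC a v" using nF[OF a(1) x0 v] by auto
              have m3': "(\<Sum>w\<in>?Wd. \<bar>w v\<bar>) / N = real k / real d"
                using sumabs[OF v] N by simp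
              have m3: "(\<Sum>w\<in>?Wd. \<bar>w v\<bar>) / real (card ?Wd) = real k / real d"
                using m3' unfolding N_def .
              have "(\<Sum>j\<in>{1..q}. \<bar>W (a, j) v\<bar>) < real q * (real k / real d + real k / real d)"
                using n3 W unfolding BC_def m3 by auto
              moreover have "real q * (real k / real d + real k / real d) = 2 * real q * real k / real d" by simp
              ultimately show "(\<Sum>j\<in>{1..q}. \<bar>W (a, j) v\<bar>) \<le> 2 * real q * real k / real d" by linarith
            qed
            have hM: "2 * real k * sqrt (real ((K+1) * d ^ K)) * (10 * sqrt (real k)) ^ K \<le> ?M"
              by (rule M_bound[OF d1 kd])
            have hB: "2 * real k + 1 \<le> ?B" by simp
            have ia: "i - 1 = a" by (simp add: a_def)
            show ?thesis
              using ptf_leveli[where h = "\<lambda>x m'. fstar d G W m' x" and V = "levels q (i - 1)",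
                  OF d1 k1 k L K q X WO[OF W i1 j] hWa hPP hGa hGi hV hh hfi nu0 nuL hconc hcnt hM hB] .
          qed
        qed
      qed
      then show "W \<in> ?H" by simp
    qed
    have "measure_pmf.prob (pmf_of_set ?\<Omega>) ?H \<ge> 1 - 4 * real d * real r * real q * real (card X) * \<delta>"
      by (rule prob_lower[OF finO neO BadO good cBad])
    then show ?thesis unfolding \<delta>_def .
  qed
qed

theorem theorem6:
  fixes K :: nat
  assumes "K \<ge> 1"
  shows "\<exists>c C. c > 0 \<and> C > 0 \<and>
    (\<forall>(d::nat) (X :: (nat \<Rightarrow> real) set) (r::nat) (q::nat) (L::real) (k::nat)
       (G :: nat \<Rightarrow> (nat \<Rightarrow> real) \<Rightarrow> (nat \<Rightarrow> real))
       (p :: nat \<Rightarrow> nat \<Rightarrow> (nat \<Rightarrow> real) \<Rightarrow> real).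
      X \<subseteq> cube d \<and> r \<ge> 1 \<and> q \<ge> 1 \<and> L > 0 \<and> odd k \<and> 1 \<le> k \<and> k \<le> d \<and>
      (\<forall>i\<le>r. \<forall>x\<in>cube d. G i x \<in> cube d) \<and>
      (\<forall>x\<in>cube d. G 0 x = x) \<and>
      (\<forall>i\<in>{1..r}. \<forall>j<d.
         (\<forall>x\<in>cube d. p i j x \<in> {-1, 1}) \<and>
         (\<exists>P. is_multilinear_ext d (p i j) P \<and> rpoly_deg_le P K \<and> lipschitz_box d L P) \<and>
         (\<forall>x\<in>X. G i x j = p i j (G (i - 1) x)))
      \<longrightarrow>
      measure_pmf.prob (pmf_of_set (PiE ({1..r} \<times> {1..q}) (\<lambda>_. Wdk d k)))
        {W. has_hierarchy X d r (levels q) (fstar d G W) K (C * real k * real d ^ K) (2 * real k + 1)}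
      \<ge> 1 - 4 * real d * real r * real q * real (card X)
            * exp (- c * real q / (L^2 * real k^2 * real d)))"
  apply (rule exI[of _ "1/1600"], rule exI[of _ "2 * (real K + 1) * 10 ^ K"])
  apply (intro conjI allI impI)
    apply simp
   apply simp
  apply (elim conjE)
  apply (rule main6[OF assms])
             apply assumption+
  done

end
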